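(* The set $\mathbb{V}_P$ of eigenvalues of $-P$ satisfies $$\mathbb{V}_P\subset\Big\{\lambda\in\mathbb{C}:\ \Re\lambda\le-\frac{\nu\pi^2}{a^2}\ \text{ and }\ |\Im\lambda|\le2\alpha+2a\sqrt{\beta\gamma}\sqrt{-\frac{\Re\lambda}{\nu}}\Big\}.$$
   Context: Let $a>0$, $\nu>0$, $\alpha\ge0$, $\beta,\gamma>0$, $\mathbb{T}^2=(\mathbb{R}/2\pi\mathbb{Z})^2$, $\Omega=\mathbb{T}^2\times(0,a)$. $\mathcal{V}=\mathcal{V}_1\times\mathcal{V}_2$, where $\mathcal{V}_1$ is the closure in $H^1(\Omega)^2$ of smooth $(u,v)$ periodic in $x,y$, vanishing at $z=0$ and $z=a$, with $\int_0^a(\partial_xu+\partial_yv)\,dz=0$ for all $(x,y)$, and $\mathcal{V}_2$ is the closure in $H^1(\Omega)$ of smooth $\theta$ periodic in $x,y$ vanishing at $z=0,a$. For $X=(u,v,\theta)$, $X'=(u',v',\theta')\in\mathcal{V}$: $(X,X')_{\mathcal{H}}=\int_\Omega(u\bar u'+v\bar v'+\frac\beta\gamma\theta\bar\theta')$, $(X,X')_{\mathcal{V}}=\int_\Omega(\nabla u\cdot\nabla\bar u'+\nabla v\cdot\nabla\bar v'+\frac\beta\gamma\nabla\theta\cdot\nabla\bar\theta')$; $w=-\int_0^z(\partial_xu+\partial_yv)dz'$, $w'=-\int_0^z(\partial_xu'+\partial_yv')dz'$; $B(X,X')=-\int_\Omega\theta\bar w'+\int_\Omega w\bar\theta'$;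 $C(X,X')=-\int_\Omega v\bar u'+\int_\Omega u\bar v'$; $\langle PX,X'\rangle=\nu(X,X')_{\mathcal{V}}+\beta B(X,X')+\alpha C(X,X')$. The eigenvalue set is $\mathbb{V}_P=\{\lambda\in\mathbb{C}:\exists X\in\mathcal{V},X\ne0,\ \lambda(X,X')_{\mathcal{H}}+\langle PX,X'\rangle=0\ \forall X'\in\mathcal{V}\}$. *)

theory Defs
  imports "HOL-Analysis.Analysis"
begin

type_synonym pt = "real \<times> real \<times> real"
type_synonym fn = "pt \<Rightarrow> complex"
type_synonym grad = "pt \<Rightarrow> pt \<Rightarrow> complex"
  \<comment> \<open>grad: D i p is the partial derivative in direction i \<in> Basis at point p\<close>

text \<open>Fundamental domain of Omega = T^2 x (0,a); points are (x,y,z).\<close>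
definition Om :: "real \<Rightarrow> pt set" where
  "Om a = {0..<2*pi} \<times> {0..<2*pi} \<times> {0<..<a}"

abbreviation MOm :: "real \<Rightarrow> pt measure" where
  "MOm a \<equiv> lebesgue_on (Om a)"

definition ex :: pt where "ex = (1, 0, 0)"
definition ey :: pt where "ey = (0, 1, 0)"

primrec Ck :: "nat \<Rightarrow> ('a::euclidean_space \<Rightarrow> 'b::real_normed_vector) \<Rightarrow> bool" where
  "Ck 0 f = continuous_on UNIV f"
| "Ck (Suc k) f = ((\<forall>x. f differentiable (at x)) \<and>
      (\<forall>i\<in>Basis. Ck k (\<lambda>x. frechet_derivative f (at x) i)))"

definition smooth_fun :: "('a::euclidean_space \<Rightarrow> 'b::real_normed_vector) \<Rightarrow> bool" where
  "smooth_fun f \<longleftrightarrow> (\<forall>k. Ck k f)"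

definition periodic_xy :: "fn \<Rightarrow> bool" where
  "periodic_xy f \<longleftrightarrow> (\<forall>x y z. f (x + 2*pi, y, z) = f (x, y, z) \<and> f (x, y + 2*pi, z) = f (x, y, z))"

definition pd :: "fn \<Rightarrow> grad" where
  "pd f i p = frechet_derivative f (at p) i"

definition test0 :: "real \<Rightarrow> fn \<Rightarrow> bool" where
  "test0 a f \<longleftrightarrow> smooth_fun f \<and> periodic_xy f \<and> (\<forall>x y. f (x, y, 0) = 0 \<and> f (x, y, a) = 0)"

definition cc_test :: "real \<Rightarrow> fn \<Rightarrow> bool" where
  "cc_test a f \<longleftrightarrow> smooth_fun f \<and> periodic_xy f \<and>
     (\<exists>\<delta>>0. \<forall>x y z. (z \<le> \<delta> \<or> a - \<delta> \<le> z) \<longrightarrow> f (x, y, z) = 0)"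

definition L2 :: "real \<Rightarrow> fn \<Rightarrow> bool" where
  "L2 a f \<longleftrightarrow> f \<in> borel_measurable (MOm a) \<and> integrable (MOm a) (\<lambda>p. (cmod (f p))\<^sup>2)"

definition weak_deriv :: "real \<Rightarrow> fn \<Rightarrow> pt \<Rightarrow> fn \<Rightarrow> bool" where
  "weak_deriv a f i g \<longleftrightarrow> (\<forall>\<phi>. cc_test a \<phi> \<longrightarrow>
     (LINT p|MOm a. f p * pd \<phi> i p) = - (LINT p|MOm a. g p * \<phi> p))"

definition H1 :: "real \<Rightarrow> fn \<Rightarrow> grad \<Rightarrow> bool" where
  "H1 a f D \<longleftrightarrow> L2 a f \<and> (\<forall>i\<in>Basis. L2 a (D i) \<and> weak_deriv a f i (D i))"

definition H1dist2 :: "real \<Rightarrow> fn \<Rightarrow> grad \<Rightarrow> fn \<Rightarrow> real" where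
  "H1dist2 a f D g = (LINT p|MOm a. (cmod (f p - g p))\<^sup>2) +
     (\<Sum>i\<in>Basis. LINT p|MOm a. (cmod (D i p - pd g i p))\<^sup>2)"

definition div_constraint :: "real \<Rightarrow> fn \<Rightarrow> fn \<Rightarrow> bool" where
  "div_constraint a \<phi> \<psi> \<longleftrightarrow> (\<forall>x y.
     (LINT z:{0..a}|lborel. pd \<phi> ex (x, y, z) + pd \<psi> ey (x, y, z)) = 0)"

text \<open>membership in V_1 (closure in H^1(Omega)^2) and V_2 (closure in H^1(Omega))\<close>
definition inV1 :: "real \<Rightarrow> fn \<Rightarrow> grad \<Rightarrow> fn \<Rightarrow> grad \<Rightarrow> bool" where
  "inV1 a u Du v Dv \<longleftrightarrow> H1 a u Du \<and> H1 a v Dv \<and>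
     (\<forall>\<epsilon>>0. \<exists>\<phi> \<psi>. test0 a \<phi> \<and> test0 a \<psi> \<and> div_constraint a \<phi> \<psi> \<and>
        H1dist2 a u Du \<phi> + H1dist2 a v Dv \<psi> < \<epsilon>)"

definition inV2 :: "real \<Rightarrow> fn \<Rightarrow> grad \<Rightarrow> bool" where
  "inV2 a \<theta> D\<theta> \<longleftrightarrow> H1 a \<theta> D\<theta> \<and> (\<forall>\<epsilon>>0. \<exists>\<phi>. test0 a \<phi> \<and> H1dist2 a \<theta> D\<theta> \<phi> < \<epsilon>)"

definition inV :: "real \<Rightarrow> fn \<Rightarrow> grad \<Rightarrow> fn \<Rightarrow> grad \<Rightarrow> fn \<Rightarrow> grad \<Rightarrow> bool" where
  "inV a u Du v Dv \<theta> D\<theta> \<longleftrightarrow> inV1 a u Du v Dv \<and> inV2 a \<theta> D\<theta>"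

definition wfun :: "grad \<Rightarrow> grad \<Rightarrow> fn" where
  "wfun Du Dv p = (case p of (x, y, z) \<Rightarrow>
     - (LINT t:{0..z}|lborel. Du ex (x, y, t) + Dv ey (x, y, t)))"

definition gradip :: "grad \<Rightarrow> grad \<Rightarrow> pt \<Rightarrow> complex" where
  "gradip D D' p = (\<Sum>i\<in>Basis. D i p * cnj (D' i p))"

definition Hform :: "real \<Rightarrow> real \<Rightarrow> real \<Rightarrow> fn \<Rightarrow> fn \<Rightarrow> fn \<Rightarrow> fn \<Rightarrow> fn \<Rightarrow> fn \<Rightarrow> complex" where
  "Hform a \<beta> \<gamma> u v \<theta> u' v' \<theta>' = (LINT p|MOm a.
     u p * cnj (u' p) + v p * cnj (v' p) + complex_of_real (\<beta> / \<gamma>) * \<theta> p * cnj (\<theta>' p))"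

definition Vform :: "real \<Rightarrow> real \<Rightarrow> real \<Rightarrow> grad \<Rightarrow> grad \<Rightarrow> grad \<Rightarrow> grad \<Rightarrow> grad \<Rightarrow> grad \<Rightarrow> complex" where
  "Vform a \<beta> \<gamma> Du Dv D\<theta> Du' Dv' D\<theta>' = (LINT p|MOm a.
     gradip Du Du' p + gradip Dv Dv' p + complex_of_real (\<beta> / \<gamma>) * gradip D\<theta> D\<theta>' p)"

definition Bform :: "real \<Rightarrow> fn \<Rightarrow> grad \<Rightarrow> grad \<Rightarrow> fn \<Rightarrow> grad \<Rightarrow> grad \<Rightarrow> complex" where
  "Bform a \<theta> Du Dv \<theta>' Du' Dv' =
     - (LINT p|MOm a. \<theta> p * cnj (wfun Du' Dv' p)) + (LINT p|MOm a. wfun Du Dv p * cnj (\<theta>' p))"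

definition Cform :: "real \<Rightarrow> fn \<Rightarrow> fn \<Rightarrow> fn \<Rightarrow> fn \<Rightarrow> complex" where
  "Cform a u v u' v' = - (LINT p|MOm a. v p * cnj (u' p)) + (LINT p|MOm a. u p * cnj (v' p))"

definition eigP :: "real \<Rightarrow> real \<Rightarrow> real \<Rightarrow> real \<Rightarrow> real \<Rightarrow> complex set" where
  "eigP a \<nu> \<alpha> \<beta> \<gamma> = {lam. \<exists>u Du v Dv \<theta> D\<theta>. inV a u Du v Dv \<theta> D\<theta> \<and>
     \<not> (AE p in MOm a. u p = 0 \<and> v p = 0 \<and> \<theta> p = 0) \<and>
     (\<forall>u' Du' v' Dv' \<theta>' D\<theta>'. inV a u' Du' v' Dv' \<theta>' D\<theta>' \<longrightarrow>
        lam * Hform a \<beta> \<gamma> u v \<theta> u' v' \<theta>'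
        + (complex_of_real \<nu> * Vform a \<beta> \<gamma> Du Dv D\<theta> Du' Dv' D\<theta>'
           + complex_of_real \<beta> * Bform a \<theta> Du Dv \<theta>' Du' Dv'
           + complex_of_real \<alpha> * Cform a u v u' v') = 0)}"

end

theory Submission
  imports Defs
begin

definition ez :: pt where "ez = (0, 0, 1)"

lemma Basis_pt: "(Basis :: pt set) = {ex, ey, ez}"
  by (auto simp: Basis_prod_def ex_def ey_def ez_def zero_prod_def)

lemma ex_neq: "ex \<noteq> ey" "ex \<noteq> ez" "ey \<noteq> ez"
  by (auto simp: ex_def ey_def ez_def)

lemma Om_borel: "Om a \<in> sets (borel :: pt measure)"
proof -
  have "{0..<2*pi} \<times> ({0..<2*pi} \<times> {0<..<a}) \<in> sets (borel \<Otimes>\<^sub>M (borel \<Otimes>\<^sub>M (borel::real measure)))"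
    by (intro pair_measureI) auto
  then show ?thesis by (simp only: Om_def borel_prod)
qed

lemma Om_lborel: "Om a \<in> sets lborel" using Om_borel by simp
lemma Om_leb: "Om a \<in> sets lebesgue" using Om_borel by simp

lemma tonelli2:
  fixes h :: "real \<times> 'b::euclidean_space \<Rightarrow> ennreal"
  assumes h: "h \<in> borel_measurable borel"
  shows "(\<integral>\<^sup>+p. h p \<partial>lborel) = (\<integral>\<^sup>+x. \<integral>\<^sup>+q. h (x,q) \<partial>lborel \<partial>lborel)"
proof -
  have hm: "h \<in> borel_measurable (lborel \<Otimes>\<^sub>M lborel)"
    using h by (simp add: lborel_prod measurable_lborel2)
  have "(\<integral>\<^sup>+p. h p \<partial>lborel) = (\<integral>\<^sup>+p. h p \<partial>(lborel \<Otimes>\<^sub>M lborel))"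
    by (simp add: lborel_prod)
  also have "\<dots> = (\<integral>\<^sup>+x. \<integral>\<^sup>+q. h (x,q) \<partial>lborel \<partial>lborel)"
    using lborel.nn_integral_fst[OF hm] by simp
  finally show ?thesis .
qed

lemma tonelli3:
  fixes h :: "pt \<Rightarrow> ennreal"
  assumes h: "h \<in> borel_measurable borel"
  shows "(\<integral>\<^sup>+p. h p \<partial>lborel) = (\<integral>\<^sup>+x. \<integral>\<^sup>+y. \<integral>\<^sup>+z. h (x,y,z) \<partial>lborel \<partial>lborel \<partial>lborel)"
proof -
  have "\<And>x. (\<lambda>q. h (x, q)) \<in> borel_measurable borel"
    using h by measurable
  then show ?thesis unfolding tonelli2[OF h] by (intro nn_integral_cong) (rule tonelli2)
qed


lemma xcos_le_sin: assumes "0 < x" "x < pi/2" shows "x * cos x \<le> sin x"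
proof -
  have "x \<le> tan x" using abs_tan_ge[of x] assms tan_pos_pi2_le[of x] by auto
  moreover have "cos x > 0" using assms by (intro cos_gt_zero) auto
  ultimately show ?thesis by (simp add: tan_def pos_le_divide_eq)
qed

lemma wirt_aux:
  fixes f f' :: "real \<Rightarrow> real" and a :: real
  assumes a: "a > 0" and df: "\<And>x. (f has_real_derivative f' x) (at x)"
    and cf': "continuous_on UNIV f'" and f0: "f 0 = 0" and fa: "f a = 0"
  shows "0 \<le> integral {0..a} (\<lambda>z. (f' z)\<^sup>2 - (pi/a)\<^sup>2 * (f z)\<^sup>2)"
proof -
  define k where "k = pi / a"
  define F where "F = (\<lambda>z. (f' z)\<^sup>2 - k\<^sup>2 * (f z)\<^sup>2)"
  have kpos: "k > 0" using a by (simp add: k_def)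
  have cf: "continuous_on UNIV f" using df by (intro has_real_derivative_imp_continuous_on) auto
  have cF: "continuous_on UNIV F" unfolding F_def by (intro continuous_intros cf cf')
  have Fint: "\<And>l u. F integrable_on {l..u}"
    by (rule integrable_continuous_interval) (rule continuous_on_subset[OF cF], auto)
  obtain M0 where M0: "M0 \<ge> 0" "\<And>z. z \<in> {0..a} \<Longrightarrow> norm (F z) \<le> M0"
    using continuous_on_compact_bound[of "{0..a}" F] continuous_on_subset[OF cF] by auto
  obtain L where L: "L \<ge> 0" "\<And>z. z \<in> {0..a} \<Longrightarrow> norm (f' z) \<le> L"
    using continuous_on_compact_bound[of "{0..a}" f'] continuous_on_subset[OF cf'] by auto
  have key: "-(2*M0 + 2*L\<^sup>2) * \<delta> \<le> integral {0..a} F" if d: "0 < \<delta>" "\<delta> < a/2" for \<delta>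
  proof -
    have I1: "- M0 * \<delta> \<le> integral {0..\<delta>} F"
    proof -
      have "((\<lambda>x. - M0) has_integral (- M0 * \<delta>)) {0..\<delta>}"
        using has_integral_const_real[of "-M0" 0 \<delta>] d by (simp add: mult.commute)
      moreover have "(F has_integral integral {0..\<delta>} F) {0..\<delta>}" using Fint by blast
      ultimately show ?thesis
        by (rule has_integral_le) (use M0 d in force)
    qed
    have I3: "- M0 * \<delta> \<le> integral {a-\<delta>..a} F"
    proof -
      have "((\<lambda>x. - M0) has_integral (- M0 * \<delta>)) {a-\<delta>..a}"
        using has_integral_const_real[of "-M0" "a-\<delta>" a] d by (simp add: mult.commute)
      moreover have "(F has_integral integral {a-\<delta>..a} F) {a-\<delta>..a}" using Fint by blast
      ultimately show ?thesis
      proof (rule has_integral_le)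
        fix x assume "x \<in> {a-\<delta>..a}"
        then have "x \<in> {0..a}" using d by auto
        then show "-M0 \<le> F x" using M0(2)[of x] by auto
      qed
    qed
    define c where "c = (\<lambda>z. k * cos (k*z) / sin (k*z))"
    define D where "D = (\<lambda>z. (-(k\<^sup>2) / (sin (k*z))\<^sup>2) * (f z)\<^sup>2 + c z * (2 * f z * f' z))"
    have sinpos: "sin (k*z) > 0" if "z \<in> {\<delta>..a-\<delta>}" for z
    proof -
      have "0 < k*z" "k*z < pi" using that d kpos a by (auto simp: k_def field_simps)
      then show ?thesis by (intro sin_gt_zero)
    qed
    have derD: "((\<lambda>z. c z * (f z)\<^sup>2) has_real_derivative D z) (at z)" if "z \<in> {\<delta>..a-\<delta>}" for z
    proof -
      have s: "sin (k*z) \<noteq> 0" using sinpos[OF that] by simp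
      have sc: "(sin (k*z))\<^sup>2 + (cos (k*z))\<^sup>2 = 1" by simp
      show ?thesis unfolding c_def D_def
        apply (rule derivative_eq_intros refl df | simp add: s)+
        using s apply (simp add: field_simps power2_eq_square)
        using sin_cos_squared_add3[of "k*z"] by algebra
    qed
    have Dle: "D z \<le> F z" if "z \<in> {\<delta>..a-\<delta>}" for z
    proof -
      define s where "s = sin (k*z)"
      define cs where "cs = cos (k*z)"
      have s: "s \<noteq> 0" using sinpos[OF that] by (simp add: s_def)
      have sc: "s\<^sup>2 + cs\<^sup>2 = 1" by (simp add: s_def cs_def)
      have e1: "-(k\<^sup>2) / s\<^sup>2 = -(k\<^sup>2) - (k * cs / s)\<^sup>2"
        using s sc apply (simp add: field_simps power2_eq_square)
        by algebra
      have "F z - D z = (f' z - c z * f z)\<^sup>2"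
        unfolding F_def D_def c_def s_def[symmetric] cs_def[symmetric] e1
        by (simp add: power2_eq_square algebra_simps)
      then show ?thesis by (metis diff_ge_0_iff_ge zero_le_power2)
    qed
    have ftc: "(D has_integral (c (a-\<delta>) * (f (a-\<delta>))\<^sup>2 - c \<delta> * (f \<delta>)\<^sup>2)) {\<delta>..a-\<delta>}"
      using d by (intro fundamental_theorem_of_calculus)
         (auto simp: has_real_derivative_iff_has_vector_derivative[symmetric] intro!: has_field_derivative_at_within derD)
    have I2: "c (a-\<delta>) * (f (a-\<delta>))\<^sup>2 - c \<delta> * (f \<delta>)\<^sup>2 \<le> integral {\<delta>..a-\<delta>} F"
      using ftc integrable_integral[OF Fint] by (rule has_integral_le) (auto intro: Dle)
    have ca: "c (a-\<delta>) = - c \<delta>"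
    proof -
      have "k * (a - \<delta>) = pi - k*\<delta>" using a by (simp add: k_def field_simps)
      then show ?thesis by (simp add: c_def sin_pi_minus cos_pi_minus)
    qed
    have cd0: "0 \<le> c \<delta>" and cd1: "c \<delta> \<le> 1/\<delta>"
    proof -
      have kd: "0 < k*\<delta>" "k*\<delta> < pi/2" using d kpos a by (auto simp: k_def field_simps)
      have sp: "sin (k*\<delta>) > 0" using kd by (intro sin_gt_zero) auto
      have cp: "cos (k*\<delta>) > 0" using kd by (intro cos_gt_zero) auto
      show "0 \<le> c \<delta>" using sp cp kpos by (simp add: c_def)
      have "k*\<delta> * cos (k*\<delta>) \<le> sin (k*\<delta>)" using xcos_le_sin[OF kd] .
      then show "c \<delta> \<le> 1/\<delta>" using sp d by (simp add: c_def field_simps)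
    qed
    have fd: "\<bar>f \<delta>\<bar> \<le> L * \<delta>"
    proof -
      obtain z where z: "0 < z" "z < \<delta>" "f \<delta> - f 0 = (\<delta> - 0) * f' z"
        using MVT2[of 0 \<delta> f f'] d df by blast
      have "\<bar>f' z\<bar> \<le> L" using L(2)[of z] z d by auto
      then show ?thesis using z f0 d by (simp add: abs_mult mult.commute mult_right_mono)
    qed
    have fad: "\<bar>f (a-\<delta>)\<bar> \<le> L * \<delta>"
    proof -
      obtain z where z: "a-\<delta> < z" "z < a" "f a - f (a-\<delta>) = (a - (a-\<delta>)) * f' z"
        using MVT2[of "a-\<delta>" a f f'] d df by force
      have "\<bar>f' z\<bar> \<le> L" using L(2)[of z] z d by auto
      moreover have "\<bar>f (a-\<delta>)\<bar> = \<delta> * \<bar>f' z\<bar>"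
      proof -
        have "\<bar>- f (a-\<delta>)\<bar> = \<bar>\<delta> * f' z\<bar>" using z fa by simp
        then show ?thesis using d(1) by (simp add: abs_mult)
      qed
      ultimately show ?thesis using d by (simp add: mult.commute mult_left_mono)
    qed
    have sq1: "(f \<delta>)\<^sup>2 \<le> (L*\<delta>)\<^sup>2" using fd by (metis abs_ge_zero power2_abs power_mono)
    have sq2: "(f (a-\<delta>))\<^sup>2 \<le> (L*\<delta>)\<^sup>2" using fad by (metis abs_ge_zero power2_abs power_mono)
    have "c \<delta> * ((f (a-\<delta>))\<^sup>2 + (f \<delta>)\<^sup>2) \<le> (1/\<delta>) * (2 * (L*\<delta>)\<^sup>2)"
      using sq1 sq2 cd0 cd1 d by (intro mult_mono) auto
    also have "\<dots> = 2 * L\<^sup>2 * \<delta>" using d by (simp add: power2_eq_square field_simps)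
    finally have bnd: "c \<delta> * ((f (a-\<delta>))\<^sup>2 + (f \<delta>)\<^sup>2) \<le> 2 * L\<^sup>2 * \<delta>" .
    have split: "integral {0..a} F = integral {0..\<delta>} F + integral {\<delta>..a-\<delta>} F + integral {a-\<delta>..a} F"
    proof -
      have "integral {0..\<delta>} F + integral {\<delta>..a} F = integral {0..a} F"
        using d Fint by (intro Henstock_Kurzweil_Integration.integral_combine) auto
      moreover have "integral {\<delta>..a-\<delta>} F + integral {a-\<delta>..a} F = integral {\<delta>..a} F"
        using d Fint by (intro Henstock_Kurzweil_Integration.integral_combine) auto
      ultimately show ?thesis by simp
    qed
    show ?thesis using I1 I2 I3 bnd split ca by (simp add: algebra_simps)
  qed
  show ?thesis
  proof (rule ccontr)
    assume neg: "\<not> ?thesis"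
    define I where "I = integral {0..a} F"
    have In: "I < 0" using neg by (simp add: I_def F_def k_def)
    define K where "K = 2*M0 + 2*L\<^sup>2 + 1"
    have Kp: "K > 0" using M0 L by (simp add: K_def add_nonneg_pos)
    define \<delta> where "\<delta> = min (a/4) (- I / (2*K))"
    have dp: "0 < \<delta>" "\<delta> < a/2" using a In Kp by (auto simp: \<delta>_def divide_neg_pos)
    have "-(2*M0 + 2*L\<^sup>2) * \<delta> \<le> I" using key[OF dp] by (simp add: I_def)
    moreover have "(2*M0 + 2*L\<^sup>2) * \<delta> \<le> K * (- I / (2*K))"
      using dp Kp M0 L by (intro mult_mono) (auto simp: K_def \<delta>_def)
    moreover have "K * (- I / (2*K)) = - I / 2" using Kp by simp
    ultimately show False using In by linarith
  qed
qed

lemma wirt_complex: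
  fixes g g' :: "real \<Rightarrow> complex" and a :: real
  assumes a: "a > 0" and dg: "\<And>x. (g has_vector_derivative g' x) (at x)"
    and cg': "continuous_on UNIV g'" and g0: "g 0 = 0" and ga: "g a = 0"
  shows "(pi/a)\<^sup>2 * integral {0..a} (\<lambda>z. (cmod (g z))\<^sup>2) \<le> integral {0..a} (\<lambda>z. (cmod (g' z))\<^sup>2)"
proof -
  define k where "k = pi/a"
  have cg: "continuous_on UNIV g"
    using dg by (intro continuous_at_imp_continuous_on) (auto intro: has_vector_derivative_continuous)
  have R: "0 \<le> integral {0..a} (\<lambda>z. (Re (g' z))\<^sup>2 - k\<^sup>2 * (Re (g z))\<^sup>2)"
    unfolding k_def
    by (rule wirt_aux[OF a]) (auto intro!: derivative_intros dg continuous_intros cg' simp: g0 ga)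
  have I: "0 \<le> integral {0..a} (\<lambda>z. (Im (g' z))\<^sup>2 - k\<^sup>2 * (Im (g z))\<^sup>2)"
    unfolding k_def
    by (rule wirt_aux[OF a]) (auto intro!: derivative_intros dg continuous_intros cg' simp: g0 ga)
  have int: "h integrable_on {0..a}" if "continuous_on UNIV h" for h :: "real \<Rightarrow> real"
    by (rule integrable_continuous_interval, rule continuous_on_subset[OF that]) auto
  have "integral {0..a} (\<lambda>z. (Re (g' z))\<^sup>2 - k\<^sup>2 * (Re (g z))\<^sup>2) + integral {0..a} (\<lambda>z. (Im (g' z))\<^sup>2 - k\<^sup>2 * (Im (g z))\<^sup>2)
     = integral {0..a} (\<lambda>z. ((Re (g' z))\<^sup>2 - k\<^sup>2 * (Re (g z))\<^sup>2) + ((Im (g' z))\<^sup>2 - k\<^sup>2 * (Im (g z))\<^sup>2))"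
    by (rule integral_add[symmetric]; rule int; intro continuous_intros cg cg')
  also have "\<dots> = integral {0..a} (\<lambda>z. (cmod (g' z))\<^sup>2 - k\<^sup>2 * (cmod (g z))\<^sup>2)"
    by (simp add: cmod_power2 algebra_simps)
  also have "\<dots> = integral {0..a} (\<lambda>z. (cmod (g' z))\<^sup>2) - k\<^sup>2 * integral {0..a} (\<lambda>z. (cmod (g z))\<^sup>2)"
    by (subst integral_diff) (auto intro!: int continuous_intros cg cg')
  finally show ?thesis using R I by (simp add: k_def)
qed

lemma wirt_nn:
  fixes g g' :: "real \<Rightarrow> complex" and a :: real
  assumes a: "a > 0" and dg: "\<And>x. (g has_vector_derivative g' x) (at x)"
    and cg': "continuous_on UNIV g'" and g0: "g 0 = 0" and ga: "g a = 0"
  shows "(\<integral>\<^sup>+z. ennreal ((cmod (g z))\<^sup>2) * indicator {0<..<a} z \<partial>lborel)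
     \<le> (\<integral>\<^sup>+z. ennreal ((a/pi)\<^sup>2 * (cmod (g' z))\<^sup>2) * indicator {0<..<a} z \<partial>lborel)"
proof -
  have cg: "continuous_on UNIV g"
    using dg by (intro continuous_at_imp_continuous_on) (auto intro: has_vector_derivative_continuous)
  have int: "(h has_integral integral {0..a} h) {0<..<a}" if "continuous_on UNIV h" for h :: "real \<Rightarrow> real"
  proof -
    from that have "h integrable_on {0..a}"
      by (intro integrable_continuous_interval) (erule continuous_on_subset, auto)
    then have "(h has_integral integral {0..a} h) {0..a}" by (rule integrable_integral)
    then have "(h has_integral integral {0..a} h) (cbox 0 a)" by simp
    then have "(h has_integral integral {0..a} h) (box 0 a)"
      by (simp only: has_integral_open_interval)
    then show "(h has_integral integral {0..a} h) {0<..<a}"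
      by (simp add: box_real)
  qed
  have e1: "(\<integral>\<^sup>+z. ennreal ((cmod (g z))\<^sup>2) * indicator {0<..<a} z \<partial>lborel) = ennreal (integral {0..a} (\<lambda>z. (cmod (g z))\<^sup>2))"
    by (rule nn_integral_has_integral_lebesgue') (auto intro!: int continuous_intros cg)
  have e2: "(\<integral>\<^sup>+z. ennreal ((a/pi)\<^sup>2 * (cmod (g' z))\<^sup>2) * indicator {0<..<a} z \<partial>lborel)
      = ennreal ((a/pi)\<^sup>2 * integral {0..a} (\<lambda>z. (cmod (g' z))\<^sup>2))"
    by (rule nn_integral_has_integral_lebesgue') (auto intro!: has_integral_mult_right int continuous_intros cg')
  have "integral {0..a} (\<lambda>z. (cmod (g z))\<^sup>2) \<le> (a/pi)\<^sup>2 * integral {0..a} (\<lambda>z. (cmod (g' z))\<^sup>2)"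
  proof -
    have w: "(pi/a)\<^sup>2 * integral {0..a} (\<lambda>z. (cmod (g z))\<^sup>2) \<le> integral {0..a} (\<lambda>z. (cmod (g' z))\<^sup>2)"
      by (rule wirt_complex[OF a dg cg' g0 ga])
    have "(a/pi)\<^sup>2 * ((pi/a)\<^sup>2 * integral {0..a} (\<lambda>z. (cmod (g z))\<^sup>2)) \<le> (a/pi)\<^sup>2 * integral {0..a} (\<lambda>z. (cmod (g' z))\<^sup>2)"
      using w by (intro mult_left_mono) auto
    moreover have "(a/pi)\<^sup>2 * (pi/a)\<^sup>2 = 1" using a by (simp add: power2_eq_square field_simps)
    ultimately show ?thesis by (simp add: mult.assoc[symmetric])
  qed
  then show ?thesis unfolding e1 e2 by (rule ennreal_leI)
qed


lemma iterS:
  fixes h :: "pt \<Rightarrow> ennreal"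
  assumes h: "h \<in> borel_measurable borel"
  shows "(\<integral>\<^sup>+p. h p \<partial>lebesgue_on (Om a)) =
    (\<integral>\<^sup>+x. \<integral>\<^sup>+y. \<integral>\<^sup>+z. h (x,y,z) * indicator (Om a) (x,y,z) \<partial>lborel \<partial>lborel \<partial>lborel)"
proof -
  have "(\<integral>\<^sup>+p. h p \<partial>lebesgue_on (Om a)) = (\<integral>\<^sup>+p. h p * indicator (Om a) p \<partial>lebesgue)"
    by (rule nn_integral_restrict_space) (simp add: Om_leb)
  also have "\<dots> = (\<integral>\<^sup>+p. h p * indicator (Om a) p \<partial>lborel)"
    by (rule nn_integral_completion)
  also have "\<dots> = (\<integral>\<^sup>+x. \<integral>\<^sup>+y. \<integral>\<^sup>+z. h (x,y,z) * indicator (Om a) (x,y,z) \<partial>lborel \<partial>lborel \<partial>lborel)"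
  proof (rule tonelli3)
    have [measurable]: "Om a \<in> sets borel" by (rule Om_borel)
    show "(\<lambda>p. h p * indicator (Om a) p) \<in> borel_measurable borel" using h by measurable
  qed
  finally show ?thesis .
qed

lemma ind_Om: "(indicator (Om a) (x,y,z) :: ennreal) =
   indicator {0..<2*pi} x * indicator {0..<2*pi} y * indicator {0<..<a} z"
  by (simp add: Om_def indicator_def)

lemma test0_props:
  assumes "test0 a \<phi>"
  shows "continuous_on UNIV \<phi>" "\<And>p. \<phi> differentiable (at p)"
    "\<And>i. i \<in> Basis \<Longrightarrow> continuous_on UNIV (pd \<phi> i)"
    "\<And>x y. \<phi> (x,y,0) = 0" "\<And>x y. \<phi> (x,y,a) = 0"
proof -
  have s: "\<And>k. Ck k \<phi>" using assms by (simp add: test0_def smooth_fun_def)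
  show "continuous_on UNIV \<phi>" using s[of 0] by simp
  show "\<And>p. \<phi> differentiable (at p)" using s[of "Suc 0"] unfolding Ck.simps by blast
  show "\<And>i. i \<in> Basis \<Longrightarrow> continuous_on UNIV (pd \<phi> i)"
    using s[of "Suc 0"] unfolding Ck.simps by (simp add: pd_def[abs_def])
  show "\<And>x y. \<phi> (x,y,0) = 0" "\<And>x y. \<phi> (x,y,a) = 0" using assms by (auto simp: test0_def)
qed

lemma line_deriv:
  assumes "\<And>p. \<phi> differentiable (at p)"
  shows "((\<lambda>z. \<phi> (x,y,z)) has_vector_derivative pd \<phi> ez (x,y,z)) (at z)"
proof -
  let ?p = "(x,y,z)"
  have d: "(\<phi> has_derivative frechet_derivative \<phi> (at ?p)) (at ?p)"
    using assms frechet_derivative_works by blast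
  have lin: "linear (frechet_derivative \<phi> (at ?p))"
    using d has_derivative_linear by blast
  have g: "((\<lambda>z::real. (x,y,z)) has_derivative (\<lambda>h. (0,0,h))) (at z)"
    by (auto intro!: derivative_eq_intros)
  have "((\<lambda>z. \<phi> (x,y,z)) has_derivative (\<lambda>h. frechet_derivative \<phi> (at ?p) (0,0,h))) (at z)"
    using diff_chain_at[OF g, of \<phi> "frechet_derivative \<phi> (at ?p)"] d by (simp add: o_def)
  moreover have "(\<lambda>h. frechet_derivative \<phi> (at ?p) (0,0,h)) = (\<lambda>h. h *\<^sub>R pd \<phi> ez ?p)"
  proof
    fix h :: real
    have "(0::real,0::real,h) = h *\<^sub>R ez" by (simp add: ez_def)
    then show "frechet_derivative \<phi> (at ?p) (0,0,h) = h *\<^sub>R pd \<phi> ez ?p"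
      by (simp add: pd_def linear_scale[OF lin])
  qed
  ultimately show ?thesis by (simp add: has_vector_derivative_def)
qed

lemma ez_Basis: "ez \<in> Basis" by (simp add: Basis_pt)
lemma ex_Basis: "ex \<in> Basis" by (simp add: Basis_pt)
lemma ey_Basis: "ey \<in> Basis" by (simp add: Basis_pt)

lemma poinc_smooth_nn:
  assumes a: "a > 0" and t: "test0 a \<phi>"
  shows "(\<integral>\<^sup>+p. ennreal ((cmod (\<phi> p))\<^sup>2) \<partial>lebesgue_on (Om a))
    \<le> (\<integral>\<^sup>+p. ennreal ((a/pi)\<^sup>2 * (cmod (pd \<phi> ez p))\<^sup>2) \<partial>lebesgue_on (Om a))"
proof -
  note tp = test0_props[OF t]
  have c1: "continuous_on UNIV \<phi>" by (rule tp(1))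
  have c2: "continuous_on UNIV (pd \<phi> ez)" by (rule tp(3)[OF ez_Basis])
  have m1: "(\<lambda>p. ennreal ((cmod (\<phi> p))\<^sup>2)) \<in> borel_measurable borel"
  proof -
    have [measurable]: "(\<lambda>p. (cmod (\<phi> p))\<^sup>2) \<in> borel_measurable borel"
      by (intro borel_measurable_continuous_onI continuous_intros c1)
    show ?thesis by measurable
  qed
  have m2: "(\<lambda>p. ennreal ((a/pi)\<^sup>2 * (cmod (pd \<phi> ez p))\<^sup>2)) \<in> borel_measurable borel"
  proof -
    have [measurable]: "(\<lambda>p. (a/pi)\<^sup>2 * (cmod (pd \<phi> ez p))\<^sup>2) \<in> borel_measurable borel"
      by (intro borel_measurable_continuous_onI continuous_intros c2)
    show ?thesis by measurable
  qed
  show ?thesis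
    unfolding iterS[OF m1] iterS[OF m2]
  proof (rule nn_integral_mono, rule nn_integral_mono)
    fix x y
    show "(\<integral>\<^sup>+z. ennreal ((cmod (\<phi> (x,y,z)))\<^sup>2) * indicator (Om a) (x,y,z) \<partial>lborel)
      \<le> (\<integral>\<^sup>+z. ennreal ((a/pi)\<^sup>2 * (cmod (pd \<phi> ez (x,y,z)))\<^sup>2) * indicator (Om a) (x,y,z) \<partial>lborel)"
    proof (cases "x \<in> {0..<2*pi} \<and> y \<in> {0..<2*pi}")
      case True
      have cz: "continuous_on UNIV (\<lambda>z. pd \<phi> ez (x,y,z))"
        by (intro continuous_on_compose2[OF c2] continuous_intros) auto
      have "(\<integral>\<^sup>+z. ennreal ((cmod (\<phi> (x,y,z)))\<^sup>2) * indicator {0<..<a} z \<partial>lborel)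
        \<le> (\<integral>\<^sup>+z. ennreal ((a/pi)\<^sup>2 * (cmod (pd \<phi> ez (x,y,z)))\<^sup>2) * indicator {0<..<a} z \<partial>lborel)"
        by (rule wirt_nn[OF a line_deriv[OF tp(2)] cz tp(4) tp(5)])
      then show ?thesis using True by (simp add: ind_Om)
    next
      case False
      then show ?thesis by (auto simp: ind_Om)
    qed
  qed
qed

lemma Om_sub_cbox: "a \<ge> 0 \<Longrightarrow> Om a \<subseteq> cbox (0,0,0) (2*pi, 2*pi, a)"
  by (auto simp: Om_def cbox_def Basis_pt ex_def ey_def ez_def inner_prod_def)

lemma Om_bounded: "bounded (Om a)"
proof (cases "a \<ge> 0")
  case True then show ?thesis using Om_sub_cbox bounded_subset bounded_cbox by metis
next
  case False then have "Om a = {}" by (auto simp: Om_def)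
  then show ?thesis by simp
qed

lemma Om_lmeas: "Om a \<in> lmeasurable"
  unfolding fmeasurable_def using Om_leb[of a] Om_lborel[of a] emeasure_bounded_finite[OF Om_bounded]
  by (simp add: emeasure_completion)

lemma fin_M: "finite_measure (lebesgue_on (Om a))"
  by (rule finite_measure_lebesgue_on[OF Om_lmeas])

lemma meas_cnj[measurable (raw)]:
  "f \<in> borel_measurable M \<Longrightarrow> (\<lambda>x. cnj (f x :: complex)) \<in> borel_measurable M"
proof -
  assume f: "f \<in> borel_measurable M"
  have "cnj \<in> borel_measurable (borel :: complex measure)"
    by (intro borel_measurable_continuous_onI continuous_intros)
  from measurable_compose[OF f this] show ?thesis by (simp add: o_def)
qed

lemma L2_meas: "L2 a f \<Longrightarrow> f \<in> borel_measurable (lebesgue_on (Om a))"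
  by (simp add: L2_def)
lemma L2_int: "L2 a f \<Longrightarrow> integrable (lebesgue_on (Om a)) (\<lambda>p. (cmod (f p))\<^sup>2)"
  by (simp add: L2_def)

lemma sq_tri: "(cmod (x - y))\<^sup>2 \<le> 2 * (cmod x)\<^sup>2 + 2 * (cmod y)\<^sup>2"
proof -
  have "cmod (x - y) \<le> cmod x + cmod y" by (rule norm_triangle_ineq4)
  then have "(cmod (x - y))\<^sup>2 \<le> (cmod x + cmod y)\<^sup>2" by (simp add: power_mono)
  also have "\<dots> \<le> 2 * (cmod x)\<^sup>2 + 2 * (cmod y)\<^sup>2"
  proof -
    have "2 * (cmod x)\<^sup>2 + 2 * (cmod y)\<^sup>2 - (cmod x + cmod y)\<^sup>2 = (cmod x - cmod y)\<^sup>2"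
      by (simp add: power2_eq_square algebra_simps)
    then show ?thesis using zero_le_power2[of "cmod x - cmod y"] by linarith
  qed
  finally show ?thesis .
qed

lemma sq_tri_add: "(cmod (x + y))\<^sup>2 \<le> 2 * (cmod x)\<^sup>2 + 2 * (cmod y)\<^sup>2"
  using sq_tri[of x "-y"] by simp

lemma L2_diff:
  assumes "L2 a f" "L2 a g" shows "L2 a (\<lambda>p. f p - g p)"
  unfolding L2_def
proof
  have [measurable]: "f \<in> borel_measurable (lebesgue_on (Om a))" "g \<in> borel_measurable (lebesgue_on (Om a))"
    using assms by (simp_all add: L2_def)
  show m: "(\<lambda>p. f p - g p) \<in> borel_measurable (lebesgue_on (Om a))"
    by measurable
  show "integrable (lebesgue_on (Om a)) (\<lambda>p. (cmod (f p - g p))\<^sup>2)"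
  proof (rule Bochner_Integration.integrable_bound)
    show "integrable (lebesgue_on (Om a)) (\<lambda>p. 2 * (cmod (f p))\<^sup>2 + 2 * (cmod (g p))\<^sup>2)"
      using assms by (simp add: L2_def)
    show "(\<lambda>p. (cmod (f p - g p))\<^sup>2) \<in> borel_measurable (lebesgue_on (Om a))" using m by measurable
    show "AE p in lebesgue_on (Om a). norm ((cmod (f p - g p))\<^sup>2) \<le> norm (2 * (cmod (f p))\<^sup>2 + 2 * (cmod (g p))\<^sup>2)"
      using sq_tri by (auto intro!: AE_I2 simp del: norm_minus_commute)
  qed
qed

lemma L2_add:
  assumes "L2 a f" "L2 a g" shows "L2 a (\<lambda>p. f p + g p)"
proof -
  have "L2 a (\<lambda>p. - g p)" using assms(2) by (simp add: L2_def)
  from L2_diff[OF assms(1) this] show ?thesis by simp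
qed

lemma L2_prod_int:
  assumes "L2 a f" "L2 a g" shows "integrable (lebesgue_on (Om a)) (\<lambda>p. f p * cnj (g p))"
proof (rule Bochner_Integration.integrable_bound[where f="\<lambda>p. (cmod (f p))\<^sup>2 + (cmod (g p))\<^sup>2"])
  show "integrable (lebesgue_on (Om a)) (\<lambda>p. (cmod (f p))\<^sup>2 + (cmod (g p))\<^sup>2)"
    using assms by (simp add: L2_def)
  have [measurable]: "f \<in> borel_measurable (lebesgue_on (Om a))" "g \<in> borel_measurable (lebesgue_on (Om a))"
    using assms by (simp_all add: L2_def)
  show "(\<lambda>p. f p * cnj (g p)) \<in> borel_measurable (lebesgue_on (Om a))" by measurable
  show "AE p in lebesgue_on (Om a). norm (f p * cnj (g p)) \<le> norm ((cmod (f p))\<^sup>2 + (cmod (g p))\<^sup>2)"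
  proof (intro AE_I2)
    fix p
    have "cmod (f p) * cmod (g p) \<le> (cmod (f p))\<^sup>2 + (cmod (g p))\<^sup>2"
    proof -
      have "(cmod (f p))\<^sup>2 + (cmod (g p))\<^sup>2 - 2 * (cmod (f p) * cmod (g p)) = (cmod (f p) - cmod (g p))\<^sup>2"
        by (simp add: power2_eq_square algebra_simps)
      moreover have "0 \<le> cmod (f p) * cmod (g p)" by simp
      ultimately show ?thesis using zero_le_power2[of "cmod (f p) - cmod (g p)"] by linarith
    qed
    then show "norm (f p * cnj (g p)) \<le> norm ((cmod (f p))\<^sup>2 + (cmod (g p))\<^sup>2)"
      by (simp add: norm_mult)
  qed
qed

lemma L2_cont:
  assumes "continuous_on UNIV h" shows "L2 a h"
  unfolding L2_def
proof
  show m: "h \<in> borel_measurable (lebesgue_on (Om a))"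
    by (rule continuous_imp_measurable_on_sets_lebesgue[OF continuous_on_subset[OF assms] Om_leb]) auto
  have cc: "compact (closure (Om a))" using Om_bounded compact_closure by blast
  obtain B where B: "\<And>p. p \<in> closure (Om a) \<Longrightarrow> norm (h p) \<le> B"
    using continuous_on_compact_bound[OF cc continuous_on_subset[OF assms subset_UNIV]] by metis
  show "integrable (lebesgue_on (Om a)) (\<lambda>p. (cmod (h p))\<^sup>2)"
  proof (rule finite_measure.integrable_const_bound[OF fin_M])
    show "(\<lambda>p. (cmod (h p))\<^sup>2) \<in> borel_measurable (lebesgue_on (Om a))" using m by measurable
    show "AE p in lebesgue_on (Om a). norm ((cmod (h p))\<^sup>2) \<le> B\<^sup>2"
    proof (rule AE_I2)
      fix p assume "p \<in> space (lebesgue_on (Om a))"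
      then have "p \<in> closure (Om a)" using closure_subset by auto
      then have "cmod (h p) \<le> B" using B by auto
      then show "norm ((cmod (h p))\<^sup>2) \<le> B\<^sup>2" by (simp add: power_mono)
    qed
  qed
qed

lemma sq_split:
  fixes x y :: complex and s :: real
  assumes s: "s > 0"
  shows "(cmod x)\<^sup>2 \<le> (1+s) * (cmod y)\<^sup>2 + (1 + 1/s) * (cmod (x - y))\<^sup>2"
proof -
  define p where "p = cmod y"
  define q where "q = cmod (x - y)"
  have pq: "p \<ge> 0" "q \<ge> 0" by (auto simp: p_def q_def)
  have "cmod x \<le> p + q" unfolding p_def q_def using norm_triangle_ineq[of y "x - y"] by simp
  then have "(cmod x)\<^sup>2 \<le> (p + q)\<^sup>2" by (simp add: power_mono)
  moreover have "2*p*q \<le> s * p\<^sup>2 + q\<^sup>2 / s"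
  proof -
    have "s * p\<^sup>2 + q\<^sup>2 / s - 2*p*q = (s*p - q)\<^sup>2 / s"
      using s by (simp add: field_simps power2_eq_square)
    moreover have "(s*p - q)\<^sup>2 / s \<ge> 0" using s by simp
    ultimately show ?thesis by linarith
  qed
  ultimately show ?thesis
    by (simp add: p_def[symmetric] q_def[symmetric] power2_eq_square algebra_simps add_divide_distrib)
qed

lemma poinc_smooth:
  assumes a: "a > 0" and t: "test0 a \<phi>"
  shows "(LINT p|lebesgue_on (Om a). (cmod (\<phi> p))\<^sup>2) \<le> (a/pi)\<^sup>2 * (LINT p|lebesgue_on (Om a). (cmod (pd \<phi> ez p))\<^sup>2)"
proof -
  note tp = test0_props[OF t]
  have i1: "integrable (lebesgue_on (Om a)) (\<lambda>p. (cmod (\<phi> p))\<^sup>2)"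
    using L2_cont[OF tp(1)] by (simp add: L2_def)
  have i2: "integrable (lebesgue_on (Om a)) (\<lambda>p. (a/pi)\<^sup>2 * (cmod (pd \<phi> ez p))\<^sup>2)"
    using L2_cont[OF tp(3)[OF ez_Basis]] by (simp add: L2_def)
  have "ennreal (LINT p|lebesgue_on (Om a). (cmod (\<phi> p))\<^sup>2)
     \<le> ennreal (LINT p|lebesgue_on (Om a). (a/pi)\<^sup>2 * (cmod (pd \<phi> ez p))\<^sup>2)"
    using poinc_smooth_nn[OF a t]
    by (simp add: nn_integral_eq_integral[OF i1] nn_integral_eq_integral[OF i2])
  then show ?thesis by (simp add: ennreal_le_iff integral_nonneg_AE)
qed

lemma le_eps_lemma:
  fixes F X K :: real
  assumes "K \<ge> 0" "\<And>e. e > 0 \<Longrightarrow> F \<le> X + K * e"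
  shows "F \<le> X"
proof (rule field_le_epsilon)
  fix e :: real assume e: "e > 0"
  have "F \<le> X + K * (e / (K+1))" using assms(2)[of "e/(K+1)"] e assms(1) by simp
  moreover have "K * (e / (K+1)) \<le> e" using e assms(1) by (simp add: field_simps)
  ultimately show "F \<le> X + e" by linarith
qed

lemma poinc_closure:
  assumes a: "a > 0" and f: "L2 a f" and g: "L2 a g"
    and appr: "\<And>\<epsilon>. \<epsilon> > 0 \<Longrightarrow> \<exists>\<phi>. test0 a \<phi> \<and>
        (LINT p|lebesgue_on (Om a). (cmod (f p - \<phi> p))\<^sup>2) < \<epsilon> \<and>
        (LINT p|lebesgue_on (Om a). (cmod (g p - pd \<phi> ez p))\<^sup>2) < \<epsilon>"
  shows "(LINT p|lebesgue_on (Om a). (cmod (f p))\<^sup>2) \<le> (a/pi)\<^sup>2 * (LINT p|lebesgue_on (Om a). (cmod (g p))\<^sup>2)"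
proof -
  let ?M = "lebesgue_on (Om a)"
  define F where "F = (LINT p|?M. (cmod (f p))\<^sup>2)"
  define G where "G = (LINT p|?M. (cmod (g p))\<^sup>2)"
  define c where "c = (a/pi)\<^sup>2"
  have c0: "c \<ge> 0" by (simp add: c_def)
  have G0: "G \<ge> 0" by (simp add: G_def integral_nonneg_AE)
  have step: "F \<le> (1+s)^2 * c * G + ((1+s)*c + 1) * (1 + 1/s) * e" if s: "s > 0" and e: "e > 0" for s e
  proof -
    obtain \<phi> where t: "test0 a \<phi>" and e1: "(LINT p|?M. (cmod (f p - \<phi> p))\<^sup>2) < e"
      and e2: "(LINT p|?M. (cmod (g p - pd \<phi> ez p))\<^sup>2) < e"
      using appr[OF e] by blast
    note tp = test0_props[OF t]
    have L\<phi>: "L2 a \<phi>" by (rule L2_cont[OF tp(1)])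
    have Lz: "L2 a (pd \<phi> ez)" by (rule L2_cont[OF tp(3)[OF ez_Basis]])
    define P where "P = (LINT p|?M. (cmod (\<phi> p))\<^sup>2)"
    define Pz where "Pz = (LINT p|?M. (cmod (pd \<phi> ez p))\<^sup>2)"
    define E1 where "E1 = (LINT p|?M. (cmod (f p - \<phi> p))\<^sup>2)"
    define E2 where "E2 = (LINT p|?M. (cmod (g p - pd \<phi> ez p))\<^sup>2)"
    have iE1: "integrable ?M (\<lambda>p. (cmod (f p - \<phi> p))\<^sup>2)" using L2_diff[OF f L\<phi>] by (rule L2_int)
    have iE2: "integrable ?M (\<lambda>p. (cmod (g p - pd \<phi> ez p))\<^sup>2)" using L2_diff[OF g Lz] by (rule L2_int)
    have iP: "integrable ?M (\<lambda>p. (cmod (\<phi> p))\<^sup>2)" using L\<phi> by (rule L2_int)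
    have iPz: "integrable ?M (\<lambda>p. (cmod (pd \<phi> ez p))\<^sup>2)" using Lz by (rule L2_int)
    have iG: "integrable ?M (\<lambda>p. (cmod (g p))\<^sup>2)" using g by (rule L2_int)
    have iF: "integrable ?M (\<lambda>p. (cmod (f p))\<^sup>2)" using f by (rule L2_int)
    have h1: "F \<le> (1+s) * P + (1 + 1/s) * E1"
    proof -
      have "F \<le> (LINT p|?M. (1+s) * (cmod (\<phi> p))\<^sup>2 + (1 + 1/s) * (cmod (f p - \<phi> p))\<^sup>2)"
        unfolding F_def using iF iP iE1 sq_split[OF s]
        by (intro integral_mono) auto
      also have "\<dots> = (1+s) * P + (1 + 1/s) * E1"
        using iP iE1 by (simp add: P_def E1_def)
      finally show ?thesis .
    qed
    have h2: "P \<le> c * Pz" unfolding P_def Pz_def c_def by (rule poinc_smooth[OF a t])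
    have h3: "Pz \<le> (1+s) * G + (1 + 1/s) * E2"
    proof -
      have "Pz \<le> (LINT p|?M. (1+s) * (cmod (g p))\<^sup>2 + (1 + 1/s) * (cmod (g p - pd \<phi> ez p))\<^sup>2)"
        unfolding Pz_def using iPz iG iE2 sq_split[OF s, of "pd \<phi> ez _" "g _"]
        by (intro integral_mono) (auto simp: norm_minus_commute)
      also have "\<dots> = (1+s) * G + (1 + 1/s) * E2"
        using iG iE2 by (simp add: G_def E2_def)
      finally show ?thesis .
    qed
    have E1e: "E1 \<le> e" "E2 \<le> e" using e1 e2 by (auto simp: E1_def E2_def)
    have s1: "1 + 1/s > 0" using s by (simp add: add_pos_pos)
    have "F \<le> (1+s) * (c * ((1+s) * G + (1 + 1/s) * E2)) + (1 + 1/s) * E1"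
    proof -
      have "(1+s) * P \<le> (1+s) * (c * Pz)" using h2 s by simp
      also have "\<dots> \<le> (1+s) * (c * ((1+s) * G + (1 + 1/s) * E2))"
        using h3 s c0 by (intro mult_left_mono) auto
      finally show ?thesis using h1 by linarith
    qed
    also have "\<dots> \<le> (1+s) * (c * ((1+s) * G + (1 + 1/s) * e)) + (1 + 1/s) * e"
    proof -
      have "(1 + 1/s) * E2 \<le> (1 + 1/s) * e" using E1e s1 by simp
      then have "(1+s) * (c * ((1+s) * G + (1 + 1/s) * E2)) \<le> (1+s) * (c * ((1+s) * G + (1 + 1/s) * e))"
        using s c0 by (intro mult_left_mono) auto
      moreover have "(1 + 1/s) * E1 \<le> (1 + 1/s) * e" using E1e s1 by simp
      ultimately show ?thesis by linarith
    qed
    also have "\<dots> = (1+s)^2 * c * G + ((1+s)*c + 1) * (1 + 1/s) * e"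
      unfolding power2_eq_square by algebra
    finally show ?thesis .
  qed
  have step2: "F \<le> (1+s)^2 * c * G" if s: "s > 0" for s
  proof -
    have K: "((1+s)*c + 1) * (1 + 1/s) \<ge> 0" using s c0 by simp
    show ?thesis by (rule le_eps_lemma[OF K]) (rule step[OF s])
  qed
  have "F \<le> c * G + (3 * c * G) * r" if r: "r > 0" "r \<le> 1" for r
  proof -
    have "r * r \<le> 1 * r" using r by (intro mult_right_mono) auto
    then have "(1 + r)^2 \<le> 1 + 3 * r" by (simp add: power2_eq_square algebra_simps)
    then have "(1 + r)^2 * (c * G) \<le> (1 + 3 * r) * (c * G)" using c0 G0 by (intro mult_right_mono) auto
    then show ?thesis using step2[OF r(1)] by (simp add: algebra_simps)
  qed
  then have "F \<le> c * G"
  proof -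
    assume h: "\<And>s. 0 < s \<Longrightarrow> s \<le> 1 \<Longrightarrow> F \<le> c * G + 3 * c * G * s"
    show ?thesis
    proof (rule le_eps_lemma[of "3*c*G"])
      show "0 \<le> 3*c*G" using c0 G0 by simp
      fix e :: real assume e: "e > 0"
      show "F \<le> c*G + 3*c*G*e"
      proof (cases "e \<le> 1")
        case True then show ?thesis using h e by auto
      next
        case False
        then have "3*c*G*1 \<le> 3*c*G*e" using c0 G0 by (intro mult_left_mono) auto
        moreover have "F \<le> c * G + 3 * c * G * 1" using h[of 1] by simp
        ultimately show ?thesis by linarith
      qed
    qed
  qed
  then show ?thesis by (simp add: F_def G_def c_def)
qed


lemma sets_borel_lborel_pair:
  "sets ((borel::'a::euclidean_space measure) \<Otimes>\<^sub>M (lborel::'b::euclidean_space measure)) = sets (borel :: ('a \<times> 'b) measure)"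
proof -
  have "sets ((borel::'a measure) \<Otimes>\<^sub>M (lborel::'b measure)) = sets ((borel::'a measure) \<Otimes>\<^sub>M (borel::'b measure))"
    by (intro sets_pair_measure_cong) auto
  then show ?thesis unfolding borel_prod .
qed

lemma meas_pair_conv:
  "f \<in> borel_measurable (borel :: ('a::euclidean_space \<times> 'b::euclidean_space) measure) \<Longrightarrow>
   f \<in> borel_measurable ((borel::'a measure) \<Otimes>\<^sub>M (lborel::'b measure))"
  using measurable_cong_sets[OF sets_borel_lborel_pair refl] by blast

definition mp :: "pt \<times> real \<Rightarrow> pt" where "mp q = (fst (fst q), fst (snd (fst q)), snd q)"

lemma mp_meas: "mp \<in> borel_measurable borel"
  unfolding mp_def by (intro borel_measurable_continuous_onI continuous_intros)

lemma t1:
  assumes N: "N \<in> sets (borel::pt measure)"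
  shows "(\<lambda>p. \<integral>\<^sup>+t. indicator N (fst p, fst (snd p), t) \<partial>lborel) \<in> borel_measurable (borel::pt measure)"
proof -
  have "(\<lambda>q. indicator N (mp q) :: ennreal) \<in> borel_measurable borel"
    using measurable_compose[OF mp_meas borel_measurable_indicator[OF N]] by (simp add: o_def)
  then have "(\<lambda>q. indicator N (mp q) :: ennreal) \<in> borel_measurable ((borel::pt measure) \<Otimes>\<^sub>M lborel)"
    by (rule meas_pair_conv)
  then have "(\<lambda>(p,t). indicator N (fst p, fst (snd p), t) :: ennreal) \<in> borel_measurable ((borel::pt measure) \<Otimes>\<^sub>M lborel)"
    by (simp add: mp_def split_beta')
  then show ?thesis by (rule lborel.borel_measurable_nn_integral)
qed

lemma t2:
  fixes G :: "pt \<Rightarrow> complex"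
  assumes G: "G \<in> borel_measurable borel"
  shows "(\<lambda>p. LINT t|lborel. indicator {0..snd (snd p)} t *\<^sub>R G (fst p, fst (snd p), t)) \<in> borel_measurable (borel::pt measure)"
proof -
  have C: "{q::pt\<times>real. 0 \<le> snd q \<and> snd q \<le> snd (snd (fst q))} \<in> sets borel"
    by (intro borel_closed closed_Collect_conj closed_Collect_le continuous_intros)
  have "(\<lambda>q. indicator {q::pt\<times>real. 0 \<le> snd q \<and> snd q \<le> snd (snd (fst q))} q *\<^sub>R G (mp q)) \<in> borel_measurable borel"
    using measurable_compose[OF mp_meas G] borel_measurable_indicator[OF C]
    by (intro borel_measurable_scaleR) (auto simp: o_def)
  then have "(\<lambda>q. indicator {q::pt\<times>real. 0 \<le> snd q \<and> snd q \<le> snd (snd (fst q))} q *\<^sub>R G (mp q)) \<in> borel_measurable ((borel::pt measure) \<Otimes>\<^sub>M lborel)"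
    by (rule meas_pair_conv)
  then have "(\<lambda>(p,t). indicator {0..snd (snd p)} t *\<^sub>R G (fst p, fst (snd p), t)) \<in> borel_measurable ((borel::pt measure) \<Otimes>\<^sub>M lborel)"
    by (simp add: mp_def split_beta' indicator_def)
  then show ?thesis by (rule lborel.borel_measurable_lebesgue_integral)
qed

lemma borel_to_M: "f \<in> borel_measurable (borel :: pt measure) \<Longrightarrow> f \<in> borel_measurable (lebesgue_on (Om a))"
  by (intro measurable_restrict_space1 measurable_completion) simp

lemma AE_M_of_null: "B \<in> null_sets (lborel :: pt measure) \<Longrightarrow> AE p in lebesgue_on (Om a). p \<notin> B"
proof -
  assume B: "B \<in> null_sets lborel"
  have "AE p in lborel. p \<notin> B" using B by (rule AE_not_in)
  then have "AE p in lebesgue. p \<notin> B" by (rule AE_completion)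
  then show ?thesis by (subst AE_restrict_space_iff) (auto simp: Om_leb elim: eventually_mono)
qed

lemma borel_version:
  fixes G :: fn
  assumes G: "G \<in> borel_measurable (lebesgue_on (Om a))"
  obtains G' N where "G' \<in> borel_measurable borel" "N \<in> null_sets lborel"
    "\<And>p. p \<in> Om a \<Longrightarrow> p \<notin> N \<Longrightarrow> G p = G' p"
proof -
  define G0 where "G0 = (\<lambda>x. indicator (Om a) x *\<^sub>R G x)"
  have "G0 \<in> borel_measurable lebesgue"
    using G unfolding G0_def by (subst (asm) borel_measurable_restrict_space_iff) (auto simp: Om_leb)
  then have r: "(\<lambda>x. Re (G0 x)) \<in> borel_measurable (completion lborel)"
    and i: "(\<lambda>x. Im (G0 x)) \<in> borel_measurable (completion lborel)" by measurable
  obtain r' where r': "r' \<in> borel_measurable lborel" "AE x in lborel. Re (G0 x) = r' x"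
    using completion_ex_borel_measurable_real[OF r] by blast
  obtain i' where i': "i' \<in> borel_measurable lborel" "AE x in lborel. Im (G0 x) = i' x"
    using completion_ex_borel_measurable_real[OF i] by blast
  define G' where "G' = (\<lambda>x. Complex (r' x) (i' x))"
  have mG': "G' \<in> borel_measurable borel"
    using r'(1) i'(1) unfolding G'_def borel_measurable_complex_iff by simp
  have "AE x in lborel. G0 x = G' x"
    using r'(2) i'(2) by eventually_elim (simp add: G'_def complex_eq_iff)
  then obtain N where N': "\<And>x. x \<in> space lborel - N \<Longrightarrow> G0 x = G' x" "N \<in> null_sets lborel"
    by (rule AE_E3) blast
  note N = N'(2) N'(1)
  show ?thesis
  proof (rule that[OF mG' N(1)])
    fix p assume "p \<in> Om a" "p \<notin> N"
    then show "G p = G' p" using N(2)[of p] by (simp add: G0_def)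
  qed
qed

lemma lp_sf: "pair_sigma_finite (lborel :: 'a::euclidean_space measure) (lborel :: 'b::euclidean_space measure)"
  by (simp add: pair_sigma_finite_def sigma_finite_lborel)

lemma null_slices:
  assumes N: "N \<in> null_sets (lborel :: pt measure)"
  obtains Bd where "Bd \<in> null_sets (lborel :: pt measure)"
    "\<And>x y z. (x,y,z) \<notin> Bd \<Longrightarrow> AE t in lborel. (x,y,t) \<notin> N"
proof -
  have Ns: "N \<in> sets (borel :: pt measure)" using N by (simp add: null_sets_def)
  define Q where "Q = (\<lambda>p::pt. \<integral>\<^sup>+t. indicator N (fst p, fst (snd p), t) \<partial>lborel)"
  define Bd where "Bd = {p. Q p \<noteq> 0}"
  have Qm: "Q \<in> borel_measurable borel" unfolding Q_def by (rule t1[OF Ns])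
  have Bds: "Bd \<in> sets (borel :: pt measure)"
    unfolding Bd_def using Qm by measurable
  have slm: "\<And>x y. (\<lambda>t. indicator N (x, y, t) :: ennreal) \<in> borel_measurable lborel"
  proof -
    fix x y :: real
    have "(\<lambda>t::real. (x,y,t)) \<in> borel_measurable borel"
      by (intro borel_measurable_continuous_onI continuous_intros)
    from measurable_compose[OF this borel_measurable_indicator[OF Ns]]
    show "(\<lambda>t. indicator N (x, y, t) :: ennreal) \<in> borel_measurable lborel" by (simp add: o_def)
  qed
  have Q0: "Q (x,y,z) = 0 \<longleftrightarrow> (AE t in lborel. (x,y,t) \<notin> N)" for x y z
    unfolding Q_def by (simp add: nn_integral_0_iff_AE[OF slm] indicator_eq_0_iff)
  have ae1: "AE p in lborel. p \<notin> N" using N by (rule AE_not_in)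
  then have "AE p in (lborel \<Otimes>\<^sub>M lborel). p \<notin> N" unfolding lborel_prod .
  then have "AE x in lborel. AE q in lborel. (x,q) \<notin> N" by (rule pair_sigma_finite.AE_pair[OF lp_sf])
  then have aexy: "AE x in lborel. AE y in lborel. AE t in lborel. (x,y,t) \<notin> N"
  proof (rule eventually_mono)
    fix x assume "AE q in (lborel::(real\<times>real) measure). (x,q) \<notin> N"
    then have "AE q in (lborel \<Otimes>\<^sub>M lborel). (x,q) \<notin> N" unfolding lborel_prod .
    then show "AE y in lborel. AE t in lborel. (x,y,t) \<notin> N" by (rule pair_sigma_finite.AE_pair[OF lp_sf, of "\<lambda>q. (x,q) \<notin> N", simplified])
  qed
  have "emeasure lborel Bd = (\<integral>\<^sup>+p. indicator Bd p \<partial>lborel)" using Bds by simp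
  also have "\<dots> = (\<integral>\<^sup>+x. \<integral>\<^sup>+y. \<integral>\<^sup>+z. indicator Bd (x,y,z) \<partial>lborel \<partial>lborel \<partial>lborel)"
    by (rule tonelli3) (rule borel_measurable_indicator[OF Bds])
  also have "\<dots> = (\<integral>\<^sup>+(x::real). 0 \<partial>lborel)"
  proof (rule nn_integral_cong_AE)
    show "AE x in lborel. (\<integral>\<^sup>+y. \<integral>\<^sup>+z. indicator Bd (x,y,z) \<partial>lborel \<partial>lborel) = 0"
      using aexy
    proof (rule eventually_mono)
      fix x assume "AE y in lborel. AE t in lborel. (x,y,t) \<notin> N"
      then have "(\<integral>\<^sup>+y. \<integral>\<^sup>+z. indicator Bd (x,y,z) \<partial>lborel \<partial>lborel) = (\<integral>\<^sup>+(y::real). 0 \<partial>lborel)"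
        by (rule nn_integral_cong_AE[OF eventually_mono]) (auto simp: Bd_def Q0)
      then show "(\<integral>\<^sup>+y. \<integral>\<^sup>+z. indicator Bd (x,y,z) \<partial>lborel \<partial>lborel) = 0" by simp
    qed
  qed
  finally have "emeasure lborel Bd = 0" by simp
  then have "Bd \<in> null_sets lborel" using Bds by (simp add: null_sets_def)
  then show ?thesis
  proof (rule that)
    fix x y z assume "(x,y,z) \<notin> Bd"
    then show "AE t in lborel. (x,y,t) \<notin> N" by (simp add: Bd_def Q0)
  qed
qed

lemma t1gen:
  fixes H :: "pt \<Rightarrow> ennreal"
  assumes H: "H \<in> borel_measurable borel"
  shows "(\<lambda>p. \<integral>\<^sup>+t. H (fst p, fst (snd p), t) \<partial>lborel) \<in> borel_measurable (borel::pt measure)"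
proof -
  have "(\<lambda>q. H (mp q)) \<in> borel_measurable borel"
    using measurable_compose[OF mp_meas H] by (simp add: o_def)
  then have "(\<lambda>q. H (mp q)) \<in> borel_measurable ((borel::pt measure) \<Otimes>\<^sub>M lborel)"
    by (rule meas_pair_conv)
  then have "(\<lambda>(p,t). H (fst p, fst (snd p), t)) \<in> borel_measurable ((borel::pt measure) \<Otimes>\<^sub>M lborel)"
    by (simp add: mp_def split_beta')
  then show ?thesis by (rule lborel.borel_measurable_nn_integral)
qed

lemma int_z: "a > 0 \<Longrightarrow> (\<integral>\<^sup>+z. ennreal z * indicator {0<..<a} z \<partial>lborel) = ennreal (a\<^sup>2 / 2)"
proof -
  assume a: "a > 0"
  have "((\<lambda>x::real. x) has_integral (a\<^sup>2 - 0\<^sup>2)/2) {0..a}" using a by (intro ident_has_integral) auto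
  then have "((\<lambda>x::real. x) has_integral a\<^sup>2/2) (cbox 0 a)" by simp
  then have "((\<lambda>x::real. x) has_integral a\<^sup>2/2) (box 0 a)" by (simp only: has_integral_open_interval)
  then have "((\<lambda>x::real. x) has_integral a\<^sup>2/2) {0<..<a}" by (simp add: box_real)
  from nn_integral_has_integral_lebesgue'[OF _ this] show ?thesis by simp
qed

lemma slice_meas: "G \<in> borel_measurable (borel :: pt measure) \<Longrightarrow> (\<lambda>t. G (x,y,t)) \<in> borel_measurable lborel"
proof -
  assume G: "G \<in> borel_measurable borel"
  have "(\<lambda>t::real. (x,y,t)) \<in> borel_measurable borel"
    by (intro borel_measurable_continuous_onI continuous_intros)
  from measurable_compose[OF this G] show ?thesis by (simp add: o_def)
qed

lemma W'_point:
  fixes G' :: fn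
  assumes G': "G' \<in> borel_measurable borel" and z: "0 < z" "z < a"
  shows "ennreal ((cmod (LINT t|lborel. indicator {0..z} t *\<^sub>R G' (x,y,t)))\<^sup>2)
    \<le> ennreal z * (\<integral>\<^sup>+t. ennreal ((cmod (G' (x,y,t)))\<^sup>2) * indicator {0<..<a} t \<partial>lborel)"
proof (cases "integrable lborel (\<lambda>t. indicator {0..z} t *\<^sub>R G' (x,y,t))")
  case False
  then show ?thesis by (simp add: not_integrable_integral_eq)
next
  case True
  have gm: "(\<lambda>t. G' (x,y,t)) \<in> borel_measurable lborel" by (rule slice_meas[OF G'])
  define F where "F = (\<lambda>t::real. indicator {0..z} t :: ennreal)"
  define Gt where "Gt = (\<lambda>t. ennreal (cmod (G' (x,y,t))) * indicator {0..z} t)"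
  have Fm: "F \<in> borel_measurable lborel" unfolding F_def by simp
  have Gtm: "Gt \<in> borel_measurable lborel" unfolding Gt_def using gm by measurable
  have n1: "ennreal (cmod (LINT t|lborel. indicator {0..z} t *\<^sub>R G' (x,y,t)))
      \<le> (\<integral>\<^sup>+t. norm (indicator {0..z} t *\<^sub>R G' (x,y,t)) \<partial>lborel)"
    by (rule integral_norm_bound_ennreal[OF True])
  also have "\<dots> = (\<integral>\<^sup>+t. F t * Gt t \<partial>lborel)"
    by (intro nn_integral_cong) (auto simp: F_def Gt_def indicator_def)
  finally have n1': "ennreal (cmod (LINT t|lborel. indicator {0..z} t *\<^sub>R G' (x,y,t))) \<le> (\<integral>\<^sup>+t. F t * Gt t \<partial>lborel)" .
  have cs: "(\<integral>\<^sup>+t. F t * Gt t \<partial>lborel)\<^sup>2 \<le> (\<integral>\<^sup>+t. F t ^ 2 \<partial>lborel) * (\<integral>\<^sup>+t. Gt t ^ 2 \<partial>lborel)"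
    by (rule Cauchy_Schwarz_nn_integral[OF Fm Gtm])
  have f2: "(\<integral>\<^sup>+t. F t ^ 2 \<partial>lborel) = ennreal z"
  proof -
    have "(\<integral>\<^sup>+t. F t ^ 2 \<partial>lborel) = (\<integral>\<^sup>+t. indicator {0..z} t \<partial>lborel)"
      by (intro nn_integral_cong) (auto simp: F_def indicator_def)
    also have "\<dots> = ennreal z" using z by simp
    finally show ?thesis .
  qed
  have g2: "(\<integral>\<^sup>+t. Gt t ^ 2 \<partial>lborel) \<le> (\<integral>\<^sup>+t. ennreal ((cmod (G' (x,y,t)))\<^sup>2) * indicator {0<..<a} t \<partial>lborel)"
  proof (rule nn_integral_mono_AE)
    show "AE t in lborel. Gt t ^ 2 \<le> ennreal ((cmod (G' (x,y,t)))\<^sup>2) * indicator {0<..<a} t"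
      using AE_lborel_singleton[of 0]
    proof (rule eventually_mono)
      fix t :: real assume t: "t \<noteq> 0"
      show "Gt t ^ 2 \<le> ennreal ((cmod (G' (x,y,t)))\<^sup>2) * indicator {0<..<a} t"
        using t z by (auto simp: Gt_def indicator_def ennreal_power[symmetric])
    qed
  qed
  have "ennreal ((cmod (LINT t|lborel. indicator {0..z} t *\<^sub>R G' (x,y,t)))\<^sup>2)
      = (ennreal (cmod (LINT t|lborel. indicator {0..z} t *\<^sub>R G' (x,y,t))))\<^sup>2"
    by (simp add: ennreal_power)
  also have "\<dots> \<le> (\<integral>\<^sup>+t. F t * Gt t \<partial>lborel)\<^sup>2"
    using n1' by (simp add: power2_eq_square mult_mono)
  also have "\<dots> \<le> ennreal z * (\<integral>\<^sup>+t. Gt t ^ 2 \<partial>lborel)" using cs f2 by simp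
  also have "\<dots> \<le> ennreal z * (\<integral>\<^sup>+t. ennreal ((cmod (G' (x,y,t)))\<^sup>2) * indicator {0<..<a} t \<partial>lborel)"
    using g2 by (rule mult_left_mono) simp
  finally show ?thesis .
qed

lemma J_bound:
  fixes G \<theta> :: fn
  assumes a: "a > 0" and LG: "L2 a G" and Lt: "L2 a \<theta>"
  shows "(cmod (LINT p|lebesgue_on (Om a).
            (case p of (x, y, z) \<Rightarrow> LINT t:{0..z}|lborel. G (x, y, t)) * cnj (\<theta> p)))\<^sup>2
     \<le> (a\<^sup>2 / 2 * (LINT p|lebesgue_on (Om a). (cmod (G p))\<^sup>2)) * (LINT p|lebesgue_on (Om a). (cmod (\<theta> p))\<^sup>2)"
proof -
  let ?M = "lebesgue_on (Om a)"
  define W where "W = (\<lambda>p::pt. case p of (x, y, z) \<Rightarrow> LINT t:{0..z}|lborel. G (x, y, t))"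
  obtain G' N where G': "G' \<in> borel_measurable borel" and N: "N \<in> null_sets lborel"
    and GG': "\<And>p. p \<in> Om a \<Longrightarrow> p \<notin> N \<Longrightarrow> G p = G' p"
    using borel_version[OF L2_meas[OF LG]] by blast
  obtain Bd where Bd: "Bd \<in> null_sets (lborel :: pt measure)"
    and Bds: "\<And>x y z. (x,y,z) \<notin> Bd \<Longrightarrow> AE t in lborel. (x,y,t) \<notin> N"
    using null_slices[OF N] by blast
  define W' where "W' = (\<lambda>p::pt. LINT t|lborel. indicator {0..snd (snd p)} t *\<^sub>R G' (fst p, fst (snd p), t))"
  have W'm: "W' \<in> borel_measurable borel" unfolding W'_def by (rule t2[OF G'])
  have c1: "cmod (W p) \<le> cmod (W' p)" if p: "p \<in> Om a" "p \<notin> Bd" for p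
  proof -
    obtain x y z where pxyz: "p = (x,y,z)" by (cases p) auto
    have xyz: "x \<in> {0..<2*pi}" "y \<in> {0..<2*pi}" "0 < z" "z < a" using p(1) by (auto simp: Om_def pxyz)
    define f1 where "f1 = (\<lambda>t. indicator {0..z} t *\<^sub>R G (x,y,t))"
    define f2 where "f2 = (\<lambda>t. indicator {0..z} t *\<^sub>R G' (x,y,t))"
    have aeN: "AE t in lborel. (x,y,t) \<notin> N" using Bds p(2) pxyz by blast
    have ae: "AE t in lborel. f1 t = f2 t"
      using aeN AE_lborel_singleton[of 0]
    proof eventually_elim
      case (elim t)
      show ?case
      proof (cases "t \<in> {0..z}")
        case True
        then have "(x,y,t) \<in> Om a" using xyz elim by (auto simp: Om_def)
        then show ?thesis using GG'[of "(x,y,t)"] elim by (simp add: f1_def f2_def)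
      next
        case False then show ?thesis by (simp add: f1_def f2_def)
      qed
    qed
    have W1: "W p = integral\<^sup>L lborel f1" by (simp add: W_def pxyz f1_def set_lebesgue_integral_def)
    have W2: "W' p = integral\<^sup>L lborel f2" by (simp add: W'_def pxyz f2_def)
    show ?thesis
    proof (cases "integrable lborel f1")
      case True
      have "f2 \<in> borel_measurable lborel" unfolding f2_def using slice_meas[OF G'] by measurable
      then have "integral\<^sup>L lborel f1 = integral\<^sup>L lborel f2"
        using True ae by (intro integral_cong_AE) auto
      then show ?thesis by (simp add: W1 W2)
    next
      case False then show ?thesis by (simp add: W1 not_integrable_integral_eq)
    qed
  qed
  define H where "H = (\<lambda>q::pt. ennreal ((cmod (G' q))\<^sup>2) * indicator {0<..<a} (snd (snd q)))"
  have snd2[measurable]: "(\<lambda>q::pt. snd (snd q)) \<in> borel_measurable borel"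
    by (intro borel_measurable_continuous_onI continuous_intros)
  have ind2[measurable]: "(\<lambda>q::pt. indicator {0<..<a} (snd (snd q)) :: ennreal) \<in> borel_measurable borel"
    using measurable_compose[OF snd2 borel_measurable_indicator[of "{0<..<a}"]] by (simp add: o_def)
  have G'm[measurable]: "G' \<in> borel_measurable borel" by (rule G')
  have Hm: "H \<in> borel_measurable borel" unfolding H_def by measurable
  define Qg where "Qg = (\<lambda>p::pt. \<integral>\<^sup>+t. H (fst p, fst (snd p), t) \<partial>lborel)"
  have Qgm: "Qg \<in> borel_measurable borel" unfolding Qg_def by (rule t1gen[OF Hm])
  have c2: "ennreal ((cmod (W' p))\<^sup>2) \<le> ennreal (snd (snd p)) * Qg p" if p: "p \<in> Om a" for p
  proof -
    obtain x y z where pxyz: "p = (x,y,z)" by (cases p) auto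
    have z: "0 < z" "z < a" using p by (auto simp: Om_def pxyz)
    show ?thesis using W'_point[OF G' z, of x y] by (simp add: W'_def Qg_def H_def pxyz)
  qed
  have c3: "(\<integral>\<^sup>+p. ennreal (snd (snd p)) * Qg p \<partial>?M) = (\<integral>\<^sup>+p. ennreal (a\<^sup>2/2 * (cmod (G' p))\<^sup>2) \<partial>?M)"
  proof -
    have Qgm'[measurable]: "Qg \<in> borel_measurable borel" by (rule Qgm)
    have m1: "(\<lambda>p::pt. ennreal (snd (snd p)) * Qg p) \<in> borel_measurable borel" by measurable
    have m2: "(\<lambda>p::pt. ennreal (a\<^sup>2/2 * (cmod (G' p))\<^sup>2)) \<in> borel_measurable borel" by measurable
    show ?thesis unfolding iterS[OF m1] iterS[OF m2]
    proof (rule nn_integral_cong, rule nn_integral_cong)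
      fix x y :: real
      show "(\<integral>\<^sup>+z. ennreal (snd (snd (x,y,z))) * Qg (x,y,z) * indicator (Om a) (x,y,z) \<partial>lborel)
        = (\<integral>\<^sup>+z. ennreal (a\<^sup>2/2 * (cmod (G' (x,y,z)))\<^sup>2) * indicator (Om a) (x,y,z) \<partial>lborel)"
      proof (cases "x \<in> {0..<2*pi} \<and> y \<in> {0..<2*pi}")
        case False then show ?thesis by (auto simp: ind_Om)
      next
        case True
        define q where "q = (\<integral>\<^sup>+t. ennreal ((cmod (G' (x,y,t)))\<^sup>2) * indicator {0<..<a} t \<partial>lborel)"
        have Qq: "Qg (x,y,z) = q" for z by (simp add: Qg_def H_def q_def)
        have "(\<integral>\<^sup>+z. ennreal (snd (snd (x,y,z))) * Qg (x,y,z) * indicator (Om a) (x,y,z) \<partial>lborel)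
            = (\<integral>\<^sup>+z. q * (ennreal z * indicator {0<..<a} z) \<partial>lborel)"
          using True by (intro nn_integral_cong) (simp add: ind_Om Qq mult_ac)
        also have "\<dots> = q * ennreal (a\<^sup>2/2)"
          by (subst nn_integral_cmult) (auto simp: int_z[OF a])
        finally have L: "(\<integral>\<^sup>+z. ennreal (snd (snd (x,y,z))) * Qg (x,y,z) * indicator (Om a) (x,y,z) \<partial>lborel)
            = q * ennreal (a\<^sup>2/2)" .
        have "(\<integral>\<^sup>+z. ennreal (a\<^sup>2/2 * (cmod (G' (x,y,z)))\<^sup>2) * indicator (Om a) (x,y,z) \<partial>lborel)
            = (\<integral>\<^sup>+z. ennreal (a\<^sup>2/2) * (ennreal ((cmod (G' (x,y,z)))\<^sup>2) * indicator {0<..<a} z) \<partial>lborel)"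
          using True by (intro nn_integral_cong, subst ennreal_mult) (auto simp: ind_Om mult_ac)
        also have "\<dots> = ennreal (a\<^sup>2/2) * q"
          unfolding q_def using slice_meas[OF G'] by (subst nn_integral_cmult) (auto intro!: borel_measurable_times_ennreal)
        finally show ?thesis using L by (simp add: mult.commute)
      qed
    qed
  qed
  have c4: "(\<integral>\<^sup>+p. ennreal ((cmod (G' p))\<^sup>2) \<partial>?M) = ennreal (LINT p|?M. (cmod (G p))\<^sup>2)"
  proof -
    have "(\<integral>\<^sup>+p. ennreal ((cmod (G' p))\<^sup>2) \<partial>?M) = (\<integral>\<^sup>+p. ennreal ((cmod (G p))\<^sup>2) \<partial>?M)"
    proof (rule nn_integral_cong_AE)
      show "AE p in ?M. ennreal ((cmod (G' p))\<^sup>2) = ennreal ((cmod (G p))\<^sup>2)"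
        using AE_M_of_null[OF N, of a]
        by (subst AE_restrict_space_iff) (auto simp: Om_leb GG' elim!: eventually_mono dest: AE_restrict_space_iff[THEN iffD1, rotated])
    qed
    also have "\<dots> = ennreal (LINT p|?M. (cmod (G p))\<^sup>2)"
      by (rule nn_integral_eq_integral[OF L2_int[OF LG]]) auto
    finally show ?thesis .
  qed
  define LG where "LG = (LINT p|?M. (cmod (G p))\<^sup>2)"
  define LT where "LT = (LINT p|?M. (cmod (\<theta> p))\<^sup>2)"
  have LG0: "LG \<ge> 0" "LT \<ge> 0" by (auto simp: LG_def LT_def integral_nonneg_AE)
  have spM: "space ?M = Om a" by (simp add: space_restrict_space)
  have Wm[measurable]: "W' \<in> borel_measurable ?M" by (rule borel_to_M[OF W'm])
  have tm[measurable]: "\<theta> \<in> borel_measurable ?M" by (rule L2_meas[OF Lt])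
  have G'M[measurable]: "G' \<in> borel_measurable ?M" by (rule borel_to_M[OF G'])
  have fm: "(\<lambda>p. ennreal (cmod (W' p))) \<in> borel_measurable ?M" by measurable
  have gm: "(\<lambda>p. ennreal (cmod (\<theta> p))) \<in> borel_measurable ?M" by measurable
  have f2: "(\<integral>\<^sup>+p. (ennreal (cmod (W' p)))^2 \<partial>?M) \<le> ennreal (a\<^sup>2/2) * ennreal LG"
  proof -
    have "(\<integral>\<^sup>+p. (ennreal (cmod (W' p)))^2 \<partial>?M) = (\<integral>\<^sup>+p. ennreal ((cmod (W' p))\<^sup>2) \<partial>?M)"
      by (simp add: ennreal_power)
    also have "\<dots> \<le> (\<integral>\<^sup>+p. ennreal (snd (snd p)) * Qg p \<partial>?M)"
      by (rule nn_integral_mono) (simp add: spM c2)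
    also have "\<dots> = (\<integral>\<^sup>+p. ennreal (a\<^sup>2/2) * ennreal ((cmod (G' p))\<^sup>2) \<partial>?M)"
      unfolding c3 by (intro nn_integral_cong, subst ennreal_mult) auto
    also have "\<dots> = ennreal (a\<^sup>2/2) * (\<integral>\<^sup>+p. ennreal ((cmod (G' p))\<^sup>2) \<partial>?M)"
      by (rule nn_integral_cmult) measurable
    also have "\<dots> = ennreal (a\<^sup>2/2) * ennreal LG" by (simp add: c4 LG_def)
    finally show ?thesis .
  qed
  have g2: "(\<integral>\<^sup>+p. (ennreal (cmod (\<theta> p)))^2 \<partial>?M) = ennreal LT"
  proof -
    have "(\<integral>\<^sup>+p. (ennreal (cmod (\<theta> p)))^2 \<partial>?M) = (\<integral>\<^sup>+p. ennreal ((cmod (\<theta> p))\<^sup>2) \<partial>?M)"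
      by (simp add: ennreal_power)
    also have "\<dots> = ennreal LT" unfolding LT_def
      by (rule nn_integral_eq_integral[OF L2_int[OF Lt]]) auto
    finally show ?thesis .
  qed
  have main: "(cmod (LINT p|?M. W p * cnj (\<theta> p)))\<^sup>2 \<le> (a\<^sup>2 / 2 * LG) * LT"
  proof (cases "integrable ?M (\<lambda>p. W p * cnj (\<theta> p))")
    case False
    then show ?thesis using LG0 by (simp add: not_integrable_integral_eq)
  next
    case True
    have "ennreal (cmod (LINT p|?M. W p * cnj (\<theta> p))) \<le> (\<integral>\<^sup>+p. norm (W p * cnj (\<theta> p)) \<partial>?M)"
      by (rule integral_norm_bound_ennreal[OF True])
    also have "\<dots> \<le> (\<integral>\<^sup>+p. ennreal (cmod (W' p)) * ennreal (cmod (\<theta> p)) \<partial>?M)"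
    proof (rule nn_integral_mono_AE)
      show "AE p in ?M. ennreal (norm (W p * cnj (\<theta> p))) \<le> ennreal (cmod (W' p)) * ennreal (cmod (\<theta> p))"
        using AE_M_of_null[OF Bd, of a]
      proof (subst (asm) AE_restrict_space_iff, simp add: Om_leb, subst AE_restrict_space_iff, simp add: Om_leb)
        assume "AE p in lebesgue. p \<in> Om a \<longrightarrow> p \<notin> Bd"
        then show "AE p in lebesgue. p \<in> Om a \<longrightarrow> ennreal (norm (W p * cnj (\<theta> p))) \<le> ennreal (cmod (W' p)) * ennreal (cmod (\<theta> p))"
        proof (rule eventually_mono, intro impI)
          fix p assume h: "p \<in> Om a \<longrightarrow> p \<notin> Bd" and p: "p \<in> Om a"
          have "cmod (W p) * cmod (\<theta> p) \<le> cmod (W' p) * cmod (\<theta> p)"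
            using c1[OF p] h p by (intro mult_right_mono) auto
          then show "ennreal (norm (W p * cnj (\<theta> p))) \<le> ennreal (cmod (W' p)) * ennreal (cmod (\<theta> p))"
            by (simp add: norm_mult ennreal_mult[symmetric] ennreal_leI)
        qed
      qed
    qed
    finally have n: "ennreal (cmod (LINT p|?M. W p * cnj (\<theta> p)))
        \<le> (\<integral>\<^sup>+p. ennreal (cmod (W' p)) * ennreal (cmod (\<theta> p)) \<partial>?M)" .
    have cs: "(\<integral>\<^sup>+p. ennreal (cmod (W' p)) * ennreal (cmod (\<theta> p)) \<partial>?M)\<^sup>2
        \<le> (\<integral>\<^sup>+p. (ennreal (cmod (W' p)))^2 \<partial>?M) * (\<integral>\<^sup>+p. (ennreal (cmod (\<theta> p)))^2 \<partial>?M)"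
      by (rule Cauchy_Schwarz_nn_integral[OF fm gm])
    have "ennreal ((cmod (LINT p|?M. W p * cnj (\<theta> p)))\<^sup>2) = (ennreal (cmod (LINT p|?M. W p * cnj (\<theta> p))))\<^sup>2"
      by (simp add: ennreal_power)
    also have "\<dots> \<le> (\<integral>\<^sup>+p. ennreal (cmod (W' p)) * ennreal (cmod (\<theta> p)) \<partial>?M)\<^sup>2"
      using n by (simp add: power2_eq_square mult_mono)
    also have "\<dots> \<le> ennreal (a\<^sup>2/2) * ennreal LG * ennreal LT"
      using cs f2 g2 by (metis (no_types, lifting) dual_order.trans mult_right_mono zero_le)
    also have "\<dots> = ennreal ((a\<^sup>2 / 2 * LG) * LT)"
    proof -
      have "ennreal ((a\<^sup>2 / 2 * LG) * LT) = ennreal (a\<^sup>2 / 2 * LG) * ennreal LT"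
        using LG0 by (intro ennreal_mult) auto
      also have "ennreal (a\<^sup>2 / 2 * LG) = ennreal (a\<^sup>2 / 2) * ennreal LG"
        using LG0 by (intro ennreal_mult) auto
      finally show ?thesis by simp
    qed
    finally show ?thesis using LG0 by (simp add: ennreal_le_iff)
  qed
  then show ?thesis by (simp add: W_def LG_def LT_def)
qed

lemma H1dist2_ge:
  fixes f g :: fn and D :: grad
  shows "(LINT p|lebesgue_on (Om a). (cmod (f p - g p))\<^sup>2) \<le> H1dist2 a f D g"
    "(LINT p|lebesgue_on (Om a). (cmod (D ez p - pd g ez p))\<^sup>2) \<le> H1dist2 a f D g"
    "0 \<le> H1dist2 a f D g"
proof -
  have nn: "\<And>i. 0 \<le> (LINT p|lebesgue_on (Om a). (cmod (D i p - pd g i p))\<^sup>2)"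
    by (auto intro!: integral_nonneg_AE)
  have n0: "0 \<le> (LINT p|lebesgue_on (Om a). (cmod (f p - g p))\<^sup>2)" by (auto intro!: integral_nonneg_AE)
  have s0: "0 \<le> (\<Sum>i\<in>Basis. LINT p|lebesgue_on (Om a). (cmod (D i p - pd g i p))\<^sup>2)"
    by (intro sum_nonneg nn)
  have s1: "(LINT p|lebesgue_on (Om a). (cmod (D ez p - pd g ez p))\<^sup>2)
      \<le> (\<Sum>i\<in>Basis. LINT p|lebesgue_on (Om a). (cmod (D i p - pd g i p))\<^sup>2)"
    by (rule member_le_sum[where f="\<lambda>i. LINT p|lebesgue_on (Om a). (cmod (D i p - pd g i p))\<^sup>2", OF ez_Basis]) (auto intro: nn)
  show "(LINT p|lebesgue_on (Om a). (cmod (f p - g p))\<^sup>2) \<le> H1dist2 a f D g"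
    "(LINT p|lebesgue_on (Om a). (cmod (D ez p - pd g ez p))\<^sup>2) \<le> H1dist2 a f D g"
    "0 \<le> H1dist2 a f D g"
    using n0 s0 s1 unfolding H1dist2_def by linarith+
qed

lemma closure_from_dist:
  assumes a: "a > 0" and f: "L2 a f" and g: "L2 a (D ez)"
    and appr: "\<And>\<epsilon>. \<epsilon> > 0 \<Longrightarrow> \<exists>\<phi>. test0 a \<phi> \<and> H1dist2 a f D \<phi> < \<epsilon>"
  shows "(LINT p|lebesgue_on (Om a). (cmod (f p))\<^sup>2) \<le> (a/pi)\<^sup>2 * (LINT p|lebesgue_on (Om a). (cmod (D ez p))\<^sup>2)"
proof (rule poinc_closure[OF a f g])
  fix \<epsilon> :: real assume e: "\<epsilon> > 0"
  obtain \<phi> where "test0 a \<phi>" "H1dist2 a f D \<phi> < \<epsilon>" using appr[OF e] by blast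
  then show "\<exists>\<phi>. test0 a \<phi> \<and> (LINT p|lebesgue_on (Om a). (cmod (f p - \<phi> p))\<^sup>2) < \<epsilon> \<and>
        (LINT p|lebesgue_on (Om a). (cmod (D ez p - pd \<phi> ez p))\<^sup>2) < \<epsilon>"
    using H1dist2_ge[where a=a and f=f and g=\<phi> and D=D] by (intro exI[of _ \<phi>]) auto
qed

lemma hform_pt:
  "u * cnj u + v * cnj v + complex_of_real c * t * cnj t =
   complex_of_real ((cmod u)\<^sup>2 + (cmod v)\<^sup>2 + c * (cmod t)\<^sup>2)"
  by (simp only: of_real_add of_real_mult complex_norm_square mult.assoc)

lemma gradip_pt:
  "gradip D D p = complex_of_real ((cmod (D ex p))\<^sup>2 + (cmod (D ey p))\<^sup>2 + (cmod (D ez p))\<^sup>2)"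
  by (simp add: gradip_def Basis_pt ex_neq complex_norm_square del: of_real_power)

theorem lemma3:
  fixes a \<nu> \<alpha> \<beta> \<gamma> :: real
  assumes "a > 0" and "\<nu> > 0" and "\<alpha> \<ge> 0" and "\<beta> > 0" and "\<gamma> > 0"
  shows "eigP a \<nu> \<alpha> \<beta> \<gamma> \<subseteq> {lam. Re lam \<le> - \<nu> * pi\<^sup>2 / a\<^sup>2 \<and>
           \<bar>Im lam\<bar> \<le> 2 * \<alpha> + 2 * a * sqrt (\<beta> * \<gamma>) * sqrt (- Re lam / \<nu>)}"
proof
  fix lam assume "lam \<in> eigP a \<nu> \<alpha> \<beta> \<gamma>"
  then obtain u Du v Dv \<theta> D\<theta> where X: "inV a u Du v Dv \<theta> D\<theta>"
    and nz: "\<not> (AE p in MOm a. u p = 0 \<and> v p = 0 \<and> \<theta> p = 0)"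
    and eq: "\<forall>u' Du' v' Dv' \<theta>' D\<theta>'. inV a u' Du' v' Dv' \<theta>' D\<theta>' \<longrightarrow>
        lam * Hform a \<beta> \<gamma> u v \<theta> u' v' \<theta>'
        + (complex_of_real \<nu> * Vform a \<beta> \<gamma> Du Dv D\<theta> Du' Dv' D\<theta>'
           + complex_of_real \<beta> * Bform a \<theta> Du Dv \<theta>' Du' Dv'
           + complex_of_real \<alpha> * Cform a u v u' v') = 0"
    unfolding eigP_def by blast
  have E: "lam * Hform a \<beta> \<gamma> u v \<theta> u v \<theta>
        + (complex_of_real \<nu> * Vform a \<beta> \<gamma> Du Dv D\<theta> Du Dv D\<theta>
           + complex_of_real \<beta> * Bform a \<theta> Du Dv \<theta> Du Dv
           + complex_of_real \<alpha> * Cform a u v u v) = 0"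
    using eq X by blast
  have a: "a > 0" and nu: "\<nu> > 0" and al: "\<alpha> \<ge> 0" and be: "\<beta> > 0" and ga: "\<gamma> > 0" using assms by auto
  let ?M = "lebesgue_on (Om a)"
  from X have V1: "inV1 a u Du v Dv" and V2: "inV2 a \<theta> D\<theta>" by (auto simp: inV_def)
  have Lu: "L2 a u" and Lv: "L2 a v" and Lt: "L2 a \<theta>"
    and LDu: "\<And>i. i \<in> Basis \<Longrightarrow> L2 a (Du i)" and LDv: "\<And>i. i \<in> Basis \<Longrightarrow> L2 a (Dv i)"
    and LDt: "\<And>i. i \<in> Basis \<Longrightarrow> L2 a (D\<theta> i)"
    using V1 V2 by (auto simp: inV1_def inV2_def H1_def)
  define c where "c = \<beta> / \<gamma>"
  have cpos: "c > 0" using be ga by (simp add: c_def)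
  define k where "k = (a/pi)\<^sup>2"
  have kpos: "k > 0" using a by (simp add: k_def)
  define I where "I = (\<lambda>f::fn. LINT p|?M. (cmod (f p))\<^sup>2)"
  have I0: "\<And>f. I f \<ge> 0" by (auto simp: I_def intro!: integral_nonneg_AE)
  have Pu: "I u \<le> k * I (Du ez)"
  proof -
    have "\<exists>\<phi>. test0 a \<phi> \<and> H1dist2 a u Du \<phi> < \<epsilon>" if e: "\<epsilon> > 0" for \<epsilon>
    proof -
      obtain \<phi> \<psi> where "test0 a \<phi>" "H1dist2 a u Du \<phi> + H1dist2 a v Dv \<psi> < \<epsilon>"
        using V1 e unfolding inV1_def by blast
      then show ?thesis using H1dist2_ge(3)[of a v Dv \<psi>] by (intro exI[of _ \<phi>]) auto
    qed
    then show ?thesis unfolding I_def k_def by (intro closure_from_dist[where D=Du, OF a Lu LDu[OF ez_Basis]]) auto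
  qed
  have Pv: "I v \<le> k * I (Dv ez)"
  proof -
    have "\<exists>\<phi>. test0 a \<phi> \<and> H1dist2 a v Dv \<phi> < \<epsilon>" if e: "\<epsilon> > 0" for \<epsilon>
    proof -
      obtain \<phi> \<psi> where "test0 a \<psi>" "H1dist2 a u Du \<phi> + H1dist2 a v Dv \<psi> < \<epsilon>"
        using V1 e unfolding inV1_def by blast
      then show ?thesis using H1dist2_ge(3)[of a u Du \<phi>] by (intro exI[of _ \<psi>]) auto
    qed
    then show ?thesis unfolding I_def k_def by (intro closure_from_dist[where D=Dv, OF a Lv LDv[OF ez_Basis]]) auto
  qed
  have Pt: "I \<theta> \<le> k * I (D\<theta> ez)"
  proof -
    have "\<exists>\<phi>. test0 a \<phi> \<and> H1dist2 a \<theta> D\<theta> \<phi> < \<epsilon>" if e: "\<epsilon> > 0" for \<epsilon>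
      using V2 e unfolding inV2_def by blast
    then show ?thesis unfolding I_def k_def by (intro closure_from_dist[where D=D\<theta>, OF a Lt LDt[OF ez_Basis]]) auto
  qed
  define Hr where "Hr = I u + I v + c * I \<theta>"
  have iu: "integrable ?M (\<lambda>p. (cmod (u p))\<^sup>2)" by (rule L2_int[OF Lu])
  have iv: "integrable ?M (\<lambda>p. (cmod (v p))\<^sup>2)" by (rule L2_int[OF Lv])
  have it: "integrable ?M (\<lambda>p. (cmod (\<theta> p))\<^sup>2)" by (rule L2_int[OF Lt])
  have Hf: "Hform a \<beta> \<gamma> u v \<theta> u v \<theta> = complex_of_real Hr"
  proof -
    have "Hform a \<beta> \<gamma> u v \<theta> u v \<theta> = (LINT p|?M. complex_of_real ((cmod (u p))\<^sup>2 + (cmod (v p))\<^sup>2 + c * (cmod (\<theta> p))\<^sup>2))"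
      unfolding Hform_def c_def by (simp only: hform_pt)
    also have "\<dots> = complex_of_real (LINT p|?M. (cmod (u p))\<^sup>2 + (cmod (v p))\<^sup>2 + c * (cmod (\<theta> p))\<^sup>2)"
      by (rule integral_complex_of_real)
    also have "(LINT p|?M. (cmod (u p))\<^sup>2 + (cmod (v p))\<^sup>2 + c * (cmod (\<theta> p))\<^sup>2) = Hr"
      using iu iv it by (simp add: Hr_def I_def)
    finally show ?thesis .
  qed
  have Hpos: "Hr > 0"
  proof (rule ccontr)
    assume "\<not> Hr > 0"
    then have H0: "Hr \<le> 0" by simp
    have ct: "c * I \<theta> \<ge> 0" using cpos I0[of \<theta>] by simp
    have z1: "I u = 0" "I v = 0" "c * I \<theta> = 0" using H0 I0[of u] I0[of v] ct unfolding Hr_def by linarith+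
    have z: "I u = 0" "I v = 0" "I \<theta> = 0" using z1 cpos by auto
    have "AE p in ?M. (cmod (u p))\<^sup>2 = 0" using z(1) iu by (simp add: I_def integral_nonneg_eq_0_iff_AE)
    moreover have "AE p in ?M. (cmod (v p))\<^sup>2 = 0" using z(2) iv by (simp add: I_def integral_nonneg_eq_0_iff_AE)
    moreover have "AE p in ?M. (cmod (\<theta> p))\<^sup>2 = 0" using z(3) it by (simp add: I_def integral_nonneg_eq_0_iff_AE)
    ultimately have "AE p in ?M. u p = 0 \<and> v p = 0 \<and> \<theta> p = 0" by eventually_elim simp
    then show False using nz by simp
  qed
  define S where "S = (\<lambda>D::grad. \<lambda>p. (cmod (D ex p))\<^sup>2 + (cmod (D ey p))\<^sup>2 + (cmod (D ez p))\<^sup>2)"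
  have iD: "\<And>D i. (\<And>i. i \<in> Basis \<Longrightarrow> L2 a (D i)) \<Longrightarrow> i \<in> Basis \<Longrightarrow> integrable ?M (\<lambda>p. (cmod (D i p))\<^sup>2)"
    by (rule L2_int) auto
  have iS: "integrable ?M (S D)" if h: "\<And>i. i \<in> Basis \<Longrightarrow> L2 a (D i)" for D
    unfolding S_def using L2_int[OF h[OF ex_Basis]] L2_int[OF h[OF ey_Basis]] L2_int[OF h[OF ez_Basis]]
    by (intro Bochner_Integration.integrable_add) auto
  define Vr where "Vr = (LINT p|?M. S Du p + S Dv p + c * S D\<theta> p)"
  have Vf: "Vform a \<beta> \<gamma> Du Dv D\<theta> Du Dv D\<theta> = complex_of_real Vr"
  proof -
    have ie: "(\<lambda>p. gradip Du Du p + gradip Dv Dv p + complex_of_real c * gradip D\<theta> D\<theta> p)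
        = (\<lambda>p. complex_of_real (S Du p + S Dv p + c * S D\<theta> p))"
      by (simp add: gradip_pt S_def)
    have "Vform a \<beta> \<gamma> Du Dv D\<theta> Du Dv D\<theta> = (LINT p|?M. complex_of_real (S Du p + S Dv p + c * S D\<theta> p))"
      unfolding Vform_def c_def[symmetric] ie ..
    also have "\<dots> = complex_of_real Vr" unfolding Vr_def by (rule integral_complex_of_real)
    finally show ?thesis .
  qed
  have iuz: "integrable ?M (\<lambda>p. (cmod (Du ez p))\<^sup>2)" "integrable ?M (\<lambda>p. (cmod (Dv ez p))\<^sup>2)"
     "integrable ?M (\<lambda>p. (cmod (D\<theta> ez p))\<^sup>2)"
     "integrable ?M (\<lambda>p. (cmod (Du ex p))\<^sup>2)" "integrable ?M (\<lambda>p. (cmod (Dv ey p))\<^sup>2)"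
    by (auto intro!: iD LDu LDv LDt simp: Basis_pt)
  have V_ge1: "I (Du ez) + I (Dv ez) + c * I (D\<theta> ez) \<le> Vr"
  proof -
    have "I (Du ez) + I (Dv ez) + c * I (D\<theta> ez) = (LINT p|?M. (cmod (Du ez p))\<^sup>2 + (cmod (Dv ez p))\<^sup>2 + c * (cmod (D\<theta> ez p))\<^sup>2)"
      using iuz by (simp add: I_def)
    also have "\<dots> \<le> Vr" unfolding Vr_def using iuz
    proof (intro integral_mono iS Bochner_Integration.integrable_add Bochner_Integration.integrable_mult_right LDu LDv LDt)
      fix p
      have "c * (cmod (D\<theta> ez p))\<^sup>2 \<le> c * S D\<theta> p" using cpos by (intro mult_left_mono) (auto simp: S_def)
      then show "(cmod (Du ez p))\<^sup>2 + (cmod (Dv ez p))\<^sup>2 + c * (cmod (D\<theta> ez p))\<^sup>2 \<le> S Du p + S Dv p + c * S D\<theta> p"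
        unfolding S_def using zero_le_power2[of "cmod (Du ex p)"] zero_le_power2[of "cmod (Du ey p)"]
          zero_le_power2[of "cmod (Dv ex p)"] zero_le_power2[of "cmod (Dv ey p)"] by linarith
    qed auto
    finally show ?thesis .
  qed
  have V_ge2: "I (Du ex) + I (Dv ey) \<le> Vr"
  proof -
    have "I (Du ex) + I (Dv ey) = (LINT p|?M. (cmod (Du ex p))\<^sup>2 + (cmod (Dv ey p))\<^sup>2)"
      using iuz by (simp add: I_def)
    also have "\<dots> \<le> Vr" unfolding Vr_def using iuz
    proof (intro integral_mono iS Bochner_Integration.integrable_add Bochner_Integration.integrable_mult_right LDu LDv LDt)
      fix p
      have "0 \<le> c * S D\<theta> p" using cpos by (auto simp: S_def)
      then show "(cmod (Du ex p))\<^sup>2 + (cmod (Dv ey p))\<^sup>2 \<le> S Du p + S Dv p + c * S D\<theta> p"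
        unfolding S_def using zero_le_power2[of "cmod (Du ez p)"] zero_le_power2[of "cmod (Du ey p)"]
          zero_le_power2[of "cmod (Dv ex p)"] zero_le_power2[of "cmod (Dv ez p)"] by linarith
    qed auto
    finally show ?thesis .
  qed
  have HV: "Hr \<le> k * Vr"
  proof -
    have "Hr \<le> k * I (Du ez) + k * I (Dv ez) + c * (k * I (D\<theta> ez))"
      unfolding Hr_def using Pu Pv Pt cpos by (intro add_mono mult_left_mono) auto
    also have "\<dots> = k * (I (Du ez) + I (Dv ez) + c * I (D\<theta> ez))" by (simp add: algebra_simps)
    also have "\<dots> \<le> k * Vr" using V_ge1 kpos by simp
    finally show ?thesis .
  qed
  define G where "G = (\<lambda>q. Du ex q + Dv ey q)"
  have LG: "L2 a G" unfolding G_def by (intro L2_add LDu LDv) (auto simp: Basis_pt)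
  define J where "J = (LINT p|?M. wfun Du Dv p * cnj (\<theta> p))"
  have Bf: "Bform a \<theta> Du Dv \<theta> Du Dv = J - cnj J"
  proof -
    have "(LINT p|?M. \<theta> p * cnj (wfun Du Dv p)) = (LINT p|?M. cnj (wfun Du Dv p * cnj (\<theta> p)))"
      by (intro arg_cong[where f="integral\<^sup>L ?M"] ext) (simp add: mult.commute)
    also have "\<dots> = cnj J" by (simp only: Bochner_Integration.integral_cnj J_def)
    finally show ?thesis by (simp add: Bform_def J_def)
  qed
  have wG: "wfun Du Dv p = - (case p of (x,y,z) \<Rightarrow> LINT t:{0..z}|lborel. G (x,y,t))" for p
    by (cases p) (simp add: wfun_def G_def)
  have Jb: "(cmod J)\<^sup>2 \<le> (a\<^sup>2 / 2 * I G) * I \<theta>"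
  proof -
    have "J = - (LINT p|?M. (case p of (x,y,z) \<Rightarrow> LINT t:{0..z}|lborel. G (x,y,t)) * cnj (\<theta> p))"
      unfolding J_def wG by simp
    then have "cmod J = cmod (LINT p|?M. (case p of (x,y,z) \<Rightarrow> LINT t:{0..z}|lborel. G (x,y,t)) * cnj (\<theta> p))"
      by simp
    then show ?thesis using J_bound[OF a LG Lt] by (simp add: I_def)
  qed
  have IG: "I G \<le> 2 * Vr"
  proof -
    have "I G \<le> (LINT p|?M. 2 * (cmod (Du ex p))\<^sup>2 + 2 * (cmod (Dv ey p))\<^sup>2)"
      unfolding I_def G_def using iuz L2_int[OF LG]
      by (intro integral_mono) (auto simp: G_def intro: sq_tri_add)
    also have "\<dots> = 2 * (I (Du ex) + I (Dv ey))" using iuz by (simp add: I_def)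
    finally show ?thesis using order_trans[OF _ mult_left_mono[OF V_ge2, of 2]] by simp
  qed
  define K where "K = (LINT p|?M. u p * cnj (v p))"
  have Cf: "Cform a u v u v = K - cnj K"
  proof -
    have "(LINT p|?M. v p * cnj (u p)) = (LINT p|?M. cnj (u p * cnj (v p)))"
      by (intro arg_cong[where f="integral\<^sup>L ?M"] ext) (simp add: mult.commute)
    also have "\<dots> = cnj K" by (simp only: Bochner_Integration.integral_cnj K_def)
    finally show ?thesis by (simp add: Cform_def K_def)
  qed
  have Kb: "2 * cmod K \<le> Hr"
  proof -
    have "cmod K \<le> (LINT p|?M. norm (u p * cnj (v p)))"
      unfolding K_def by (rule integral_norm_bound)
    also have "\<dots> \<le> (LINT p|?M. ((cmod (u p))\<^sup>2 + (cmod (v p))\<^sup>2) / 2)"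
    proof (rule integral_mono)
      show "integrable ?M (\<lambda>p. norm (u p * cnj (v p)))"
        using L2_prod_int[OF Lu Lv] by (rule integrable_norm)
      show "integrable ?M (\<lambda>p. ((cmod (u p))\<^sup>2 + (cmod (v p))\<^sup>2) / 2)" using iu iv by simp
      fix p
      have "(cmod (u p))\<^sup>2 + (cmod (v p))\<^sup>2 - 2 * (cmod (u p) * cmod (v p)) = (cmod (u p) - cmod (v p))\<^sup>2"
        by (simp add: power2_eq_square algebra_simps)
      then have "2 * (cmod (u p) * cmod (v p)) \<le> (cmod (u p))\<^sup>2 + (cmod (v p))\<^sup>2"
        using zero_le_power2[of "cmod (u p) - cmod (v p)"] by linarith
      then show "norm (u p * cnj (v p)) \<le> ((cmod (u p))\<^sup>2 + (cmod (v p))\<^sup>2) / 2"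
        by (simp add: norm_mult)
    qed
    also have "\<dots> = (I u + I v) / 2" using iu iv by (simp add: I_def)
    finally have "2 * cmod K \<le> I u + I v" by simp
    moreover have "0 \<le> c * I \<theta>" using cpos I0[of \<theta>] by simp
    ultimately show ?thesis unfolding Hr_def by linarith
  qed
  have E2: "lam * complex_of_real Hr + (complex_of_real \<nu> * complex_of_real Vr
      + complex_of_real \<beta> * (J - cnj J) + complex_of_real \<alpha> * (K - cnj K)) = 0"
    using E unfolding Hf Vf Bf Cf .
  have ERe: "Re lam * Hr + \<nu> * Vr = 0" using arg_cong[OF E2, of Re] by simp
  have EIm: "Im lam * Hr + \<beta> * (2 * Im J) + \<alpha> * (2 * Im K) = 0" using arg_cong[OF E2, of Im] by simp
  have Vr_eq: "Vr = (- Re lam / \<nu>) * Hr" using ERe nu by (simp add: field_simps)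
  have Re1: "Re lam \<le> - \<nu> * pi\<^sup>2 / a\<^sup>2"
  proof -
    have "Re lam * Hr = - \<nu> * Vr" using ERe by simp
    also have "\<dots> \<le> - \<nu> * (Hr / k)" using HV kpos nu by (simp add: field_simps)
    finally have "Re lam * Hr \<le> (- \<nu> / k) * Hr" by simp
    then have "Re lam \<le> - \<nu> / k" using Hpos by (rule mult_right_le_imp_le)
    also have "- \<nu> / k = - \<nu> * pi\<^sup>2 / a\<^sup>2" using a by (simp add: k_def power_divide)
    finally show ?thesis .
  qed
  define R where "R = - Re lam / \<nu>"
  have "- \<nu> * pi\<^sup>2 / a\<^sup>2 \<le> 0" using nu by (simp add: divide_nonpos_pos)
  then have "Re lam \<le> 0" using Re1 by linarith
  then have R0: "R \<ge> 0" using nu by (simp add: R_def divide_nonpos_pos)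
  have Vr_R: "Vr = R * Hr" using Vr_eq by (simp add: R_def)
  have It: "I \<theta> \<le> Hr / c" using I0[of u] I0[of v] cpos unfolding Hr_def by (simp add: field_simps)
  have Jb2: "(cmod J)\<^sup>2 \<le> (a * Hr * sqrt (R / c))\<^sup>2"
  proof -
    have "(cmod J)\<^sup>2 \<le> (a\<^sup>2 / 2 * I G) * I \<theta>" by (rule Jb)
    also have "\<dots> \<le> (a\<^sup>2 / 2 * (2 * Vr)) * (Hr / c)"
      using IG It I0[of G] I0[of \<theta>] by (intro mult_mono) auto
    also have "\<dots> = (a * Hr * sqrt (R / c))\<^sup>2"
    proof -
      have Rc: "0 \<le> R/c" using R0 cpos by (rule divide_nonneg_pos)
      have sq: "(sqrt (R/c))\<^sup>2 = R/c" by (rule real_sqrt_pow2[OF Rc])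
      have A1: "(a * Hr * sqrt (R / c))\<^sup>2 = (a * Hr)\<^sup>2 * (sqrt (R/c))\<^sup>2" by (rule power_mult_distrib)
      have A2: "(a * Hr)\<^sup>2 = a\<^sup>2 * Hr\<^sup>2" by (rule power_mult_distrib)
      have A: "(a * Hr * sqrt (R / c))\<^sup>2 = a\<^sup>2 * Hr\<^sup>2 * (R/c)" unfolding A1 A2 sq ..
      have B: "(a\<^sup>2 / 2 * (2 * Vr)) * (Hr / c) = a\<^sup>2 * Hr\<^sup>2 * (R/c)"
        unfolding Vr_R using cpos by (simp add: field_simps power2_eq_square)
      show ?thesis by (rule trans[OF B sym[OF A]])
    qed
    finally show ?thesis .
  qed
  have Jb3: "cmod J \<le> a * Hr * sqrt (R / c)"
  proof (rule power2_le_imp_le[OF Jb2])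
    have "0 \<le> a * Hr" using a Hpos by simp
    moreover have "0 \<le> sqrt (R / c)" using divide_nonneg_pos[OF R0 cpos] by simp
    ultimately show "0 \<le> a * Hr * sqrt (R / c)" by (rule mult_nonneg_nonneg)
  qed
  have bs: "\<beta> * sqrt (R / c) = sqrt (\<beta> * \<gamma>) * sqrt R"
  proof -
    have "sqrt (\<beta>\<^sup>2 * (R / c)) = sqrt (\<beta>\<^sup>2) * sqrt (R / c)" by (rule real_sqrt_mult)
    then have "\<beta> * sqrt (R / c) = sqrt (\<beta>\<^sup>2 * (R / c))" using be by simp
    also have "\<beta>\<^sup>2 * (R / c) = (\<beta> * \<gamma>) * R" using be ga by (simp add: c_def power2_eq_square field_simps)
    finally show ?thesis by (simp add: real_sqrt_mult)
  qed
  have "\<bar>Im lam\<bar> * Hr = \<bar>\<beta> * (2 * Im J) + \<alpha> * (2 * Im K)\<bar>"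
  proof -
    have "Im lam * Hr = - (\<beta> * (2 * Im J) + \<alpha> * (2 * Im K))" using EIm by linarith
    then have "\<bar>Im lam * Hr\<bar> = \<bar>\<beta> * (2 * Im J) + \<alpha> * (2 * Im K)\<bar>" by simp
    then show ?thesis using Hpos by (simp add: abs_mult)
  qed
  also have "\<dots> \<le> \<beta> * (2 * cmod J) + \<alpha> * (2 * cmod K)"
  proof -
    have "\<bar>\<beta> * (2 * Im J) + \<alpha> * (2 * Im K)\<bar> \<le> \<bar>\<beta> * (2 * Im J)\<bar> + \<bar>\<alpha> * (2 * Im K)\<bar>"
      by (rule abs_triangle_ineq)
    also have "\<bar>\<beta> * (2 * Im J)\<bar> = \<beta> * (2 * \<bar>Im J\<bar>)" using be by (simp add: abs_mult)
    also have "\<bar>\<alpha> * (2 * Im K)\<bar> = \<alpha> * (2 * \<bar>Im K\<bar>)" using al by (simp add: abs_mult)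
    also have "\<beta> * (2 * \<bar>Im J\<bar>) \<le> \<beta> * (2 * cmod J)" using be abs_Im_le_cmod[of J] by simp
    also have "\<alpha> * (2 * \<bar>Im K\<bar>) \<le> \<alpha> * (2 * cmod K)" using al abs_Im_le_cmod[of K] by (simp add: mult_left_mono)
    finally show ?thesis by simp
  qed
  also have "\<dots> \<le> 2 * (\<beta> * (a * Hr * sqrt (R / c))) + \<alpha> * Hr"
  proof -
    have "(2 * \<beta>) * cmod J \<le> (2 * \<beta>) * (a * Hr * sqrt (R / c))" using be Jb3 by (intro mult_left_mono) auto
    then have f1: "\<beta> * (2 * cmod J) \<le> 2 * (\<beta> * (a * Hr * sqrt (R / c)))" by (simp only: mult_ac)
    have f2: "\<alpha> * (2 * cmod K) \<le> \<alpha> * Hr" using al Kb by (simp add: mult_left_mono)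
    show ?thesis using f1 f2 by linarith
  qed
  also have "\<dots> = (2 * a * sqrt (\<beta> * \<gamma>) * sqrt R + \<alpha>) * Hr"
  proof -
    have "2 * (\<beta> * (a * Hr * sqrt (R / c))) = 2 * a * Hr * (\<beta> * sqrt (R / c))" by (simp add: algebra_simps)
    then show ?thesis unfolding bs by (simp add: algebra_simps)
  qed
  finally have "\<bar>Im lam\<bar> * Hr \<le> (2 * a * sqrt (\<beta> * \<gamma>) * sqrt R + \<alpha>) * Hr" .
  then have "\<bar>Im lam\<bar> \<le> 2 * a * sqrt (\<beta> * \<gamma>) * sqrt R + \<alpha>" using Hpos by (rule mult_right_le_imp_le)
  then have Im1: "\<bar>Im lam\<bar> \<le> 2 * \<alpha> + 2 * a * sqrt (\<beta> * \<gamma>) * sqrt (- Re lam / \<nu>)"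
    using al by (simp add: R_def)
  show "lam \<in> {lam. Re lam \<le> - \<nu> * pi\<^sup>2 / a\<^sup>2 \<and>
           \<bar>Im lam\<bar> \<le> 2 * \<alpha> + 2 * a * sqrt (\<beta> * \<gamma>) * sqrt (- Re lam / \<nu>)}"
    using Re1 Im1 by simp
qed

end
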